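(* Let $n\ge0$ and let $\mathfrak g$ be a Leibniz algebra whose Frattini subalgebra $\Phi(\mathfrak g)$ is trivial. Then, up to isomorphism, there is only one $n$-Lie-stem Leibniz algebra that is $n$-Lie-isoclinic to $\mathfrak g$, namely $\mathfrak g/\mathcal Z_n^{\mathsf{Lie}}(\mathfrak g)$.
   Context: All Leibniz algebras are over a field $\mathbb{K}$ with $\frac12\in\mathbb{K}$. A Leibniz algebra is a vector space $\mathfrak g$ with a bilinear bracket $[-,-]$ satisfying $[x,[y,z]]=[[x,y],z]-[[x,z],y]$. For $x,y\in\mathfrak g$ put $[x,y]_{lie}=[x,y]+[y,x]$. For two-sided ideals $\mathfrak m,\mathfrak n$ of $\mathfrak g$, $[\mathfrak m,\mathfrak n]_{\mathsf{Lie}}$ denotes the two-sided ideal of $\mathfrak g$ generated by $\{[m,x]_{lie}: m\in\mathfrak m, x\in\mathfrak n\}$. Lower Lie-central series: $\gamma_1^{\mathsf{Lie}}(\mathfrak g)=\mathfrak g$, $\gamma_i^{\mathsf{Lie}}(\mathfrak g)=[\gamma_{i-1}^{\mathsf{Lie}}(\mathfrak g),\mathfrak g]_{\mathsf{Lie}}$ for $i\ge2$. Upper Lie-central series: $\mathcal Z_0^{\mathsf{Lie}}(\mathfrak g)=0$, $\mathcal Z_i^{\mathsf{Lie}}(\mathfrak g)=\{x\in\mathfrak g:[x,y]_{lie}\in\mathcal Z_{i-1}^{\mathsf{Lie}}(\mathfrak g)\ \text{for all } y\in\mathfrak g\}$ for $i\ge1$. A Leibniz algebra $\mathfrak g$ is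 an $n$-Lie-stem Leibniz algebra if $\mathcal Z_n^{\mathsf{Lie}}(\mathfrak g)\subseteq\gamma_{n+1}^{\mathsf{Lie}}(\mathfrak g)$. The Frattini subalgebra $\Phi(\mathfrak g)$ is the intersection of all maximal subalgebras of $\mathfrak g$. For $n\ge0$, Leibniz algebras $\mathfrak g_1,\mathfrak g_2$ are $n$-Lie-isoclinic, written $\mathfrak g_1\sim_n\mathfrak g_2$, if there exist Leibniz algebra isomorphisms $\eta:\mathfrak g_1/\mathcal Z_n^{\mathsf{Lie}}(\mathfrak g_1)\to\mathfrak g_2/\mathcal Z_n^{\mathsf{Lie}}(\mathfrak g_2)$ and $\xi:\gamma_{n+1}^{\mathsf{Lie}}(\mathfrak g_1)\to\gamma_{n+1}^{\mathsf{Lie}}(\mathfrak g_2)$ such that $\xi([\cdots[[x_1,x_2]_{lie},x_3]_{lie},\ldots,x_{n+1}]_{lie})=[\cdots[[y_1,y_2]_{lie},y_3]_{lie},\ldots,y_{n+1}]_{lie}$ whenever $x_i\in\mathfrak g_1$, $y_i\in\mathfrak g_2$ satisfy $\eta(x_i+\mathcal Z_n^{\mathsf{Lie}}(\mathfrak g_1))=y_i+\mathcal Z_n^{\mathsf{Lie}}(\mathfrak g_2)$ for $i=1,\ldots,n+1$. *)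

theory Defs
  imports Main
begin

record ('k, 'v) leib =
  lcarrier :: "'v set"
  ladd :: "'v \<Rightarrow> 'v \<Rightarrow> 'v"
  lzero :: "'v"
  lneg :: "'v \<Rightarrow> 'v"
  lsmul :: "'k \<Rightarrow> 'v \<Rightarrow> 'v"
  lbr :: "'v \<Rightarrow> 'v \<Rightarrow> 'v"

definition leibniz_algebra :: "('k::field, 'v, 'z) leib_scheme \<Rightarrow> bool" where
  "leibniz_algebra L \<longleftrightarrow>
    (let V = lcarrier L; add = ladd L; z = lzero L; ng = lneg L; sm = lsmul L; br = lbr L in
     z \<in> V \<and>
     (\<forall>x\<in>V. \<forall>y\<in>V. add x y \<in> V) \<and>
     (\<forall>x\<in>V. ng x \<in> V) \<and>
     (\<forall>c. \<forall>x\<in>V. sm c x \<in> V) \<and>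
     (\<forall>x\<in>V. \<forall>y\<in>V. br x y \<in> V) \<and>
     (\<forall>x\<in>V. \<forall>y\<in>V. \<forall>w\<in>V. add (add x y) w = add x (add y w)) \<and>
     (\<forall>x\<in>V. \<forall>y\<in>V. add x y = add y x) \<and>
     (\<forall>x\<in>V. add z x = x) \<and>
     (\<forall>x\<in>V. add (ng x) x = z) \<and>
     (\<forall>c. \<forall>x\<in>V. \<forall>y\<in>V. sm c (add x y) = add (sm c x) (sm c y)) \<and>
     (\<forall>c d. \<forall>x\<in>V. sm (c + d) x = add (sm c x) (sm d x)) \<and>
     (\<forall>c d. \<forall>x\<in>V. sm (c * d) x = sm c (sm d x)) \<and>
     (\<forall>x\<in>V. sm 1 x = x) \<and>
     (\<forall>x\<in>V. \<forall>y\<in>V. \<forall>w\<in>V. br (add x y) w = add (br x w) (br y w)) \<and>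
     (\<forall>x\<in>V. \<forall>y\<in>V. \<forall>w\<in>V. br x (add y w) = add (br x y) (br x w)) \<and>
     (\<forall>c. \<forall>x\<in>V. \<forall>y\<in>V. br (sm c x) y = sm c (br x y)) \<and>
     (\<forall>c. \<forall>x\<in>V. \<forall>y\<in>V. br x (sm c y) = sm c (br x y)) \<and>
     (\<forall>x\<in>V. \<forall>y\<in>V. \<forall>w\<in>V. br x (br y w) = add (br (br x y) w) (ng (br (br x w) y))))"

definition lie :: "('k, 'v, 'z) leib_scheme \<Rightarrow> 'v \<Rightarrow> 'v \<Rightarrow> 'v" where
  "lie L x y = ladd L (lbr L x y) (lbr L y x)"

definition subspace :: "('k, 'v, 'z) leib_scheme \<Rightarrow> 'v set \<Rightarrow> bool" where
  "subspace L S \<longleftrightarrow> S \<subseteq> lcarrier L \<and> lzero L \<in> S \<and>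
     (\<forall>x\<in>S. \<forall>y\<in>S. ladd L x y \<in> S) \<and> (\<forall>c. \<forall>x\<in>S. lsmul L c x \<in> S)"

definition subalgebra :: "('k, 'v, 'z) leib_scheme \<Rightarrow> 'v set \<Rightarrow> bool" where
  "subalgebra L S \<longleftrightarrow> subspace L S \<and> (\<forall>x\<in>S. \<forall>y\<in>S. lbr L x y \<in> S)"

definition maximal_subalgebra :: "('k, 'v, 'z) leib_scheme \<Rightarrow> 'v set \<Rightarrow> bool" where
  "maximal_subalgebra L M \<longleftrightarrow> subalgebra L M \<and> M \<noteq> lcarrier L \<and>
     (\<forall>N. subalgebra L N \<and> M \<subseteq> N \<longrightarrow> N = M \<or> N = lcarrier L)"

text \<open>Frattini subalgebra: intersection of all maximal subalgebras
  (the whole algebra if there are none).\<close>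
definition frattini :: "('k, 'v, 'z) leib_scheme \<Rightarrow> 'v set" where
  "frattini L = lcarrier L \<inter> \<Inter>{M. maximal_subalgebra L M}"

definition ideal :: "('k, 'v, 'z) leib_scheme \<Rightarrow> 'v set \<Rightarrow> bool" where
  "ideal L I \<longleftrightarrow> subspace L I \<and>
     (\<forall>x\<in>lcarrier L. \<forall>i\<in>I. lbr L x i \<in> I \<and> lbr L i x \<in> I)"

definition ideal_gen :: "('k, 'v, 'z) leib_scheme \<Rightarrow> 'v set \<Rightarrow> 'v set" where
  "ideal_gen L X = \<Inter>{I. ideal L I \<and> X \<subseteq> I}"

definition lie_comm :: "('k, 'v, 'z) leib_scheme \<Rightarrow> 'v set \<Rightarrow> 'v set \<Rightarrow> 'v set" where
  "lie_comm L M N = ideal_gen L {lie L m x | m x. m \<in> M \<and> x \<in> N}"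

text \<open>Lower Lie-central series, indexed as in the paper: gamma L 1 = g
  (gamma L 0 is set to g as well; it is never used).\<close>
primrec gamma :: "('k, 'v, 'z) leib_scheme \<Rightarrow> nat \<Rightarrow> 'v set" where
  "gamma L 0 = lcarrier L"
| "gamma L (Suc i) = (if i = 0 then lcarrier L else lie_comm L (gamma L i) (lcarrier L))"

primrec zeta :: "('k, 'v, 'z) leib_scheme \<Rightarrow> nat \<Rightarrow> 'v set" where
  "zeta L 0 = {lzero L}"
| "zeta L (Suc i) = {x \<in> lcarrier L. \<forall>y\<in>lcarrier L. lie L x y \<in> zeta L i}"

definition lie_stem :: "nat \<Rightarrow> ('k, 'v, 'z) leib_scheme \<Rightarrow> bool" where
  "lie_stem n L \<longleftrightarrow> zeta L n \<subseteq> gamma L (Suc n)"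

definition sub :: "('k, 'v) leib \<Rightarrow> 'v set \<Rightarrow> ('k, 'v) leib" where
  "sub L S = L\<lparr>lcarrier := S\<rparr>"

definition coset :: "('k, 'v, 'z) leib_scheme \<Rightarrow> 'v set \<Rightarrow> 'v \<Rightarrow> 'v set" where
  "coset L I x = ladd L x ` I"

definition quot :: "('k, 'v, 'z) leib_scheme \<Rightarrow> 'v set \<Rightarrow> ('k, 'v set) leib" where
  "quot L I = \<lparr>
     lcarrier = coset L I ` lcarrier L,
     ladd = (\<lambda>A B. {ladd L a b | a b. a \<in> A \<and> b \<in> B}),
     lzero = I,
     lneg = (\<lambda>A. lneg L ` A),
     lsmul = (\<lambda>c A. {ladd L (lsmul L c a) i | a i. a \<in> A \<and> i \<in> I}),
     lbr = (\<lambda>A B. {ladd L (lbr L a b) i | a b i. a \<in> A \<and> b \<in> B \<and> i \<in> I}) \<rparr>"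

definition leib_hom :: "('v \<Rightarrow> 'w) \<Rightarrow> ('k, 'v, 'z1) leib_scheme \<Rightarrow> ('k, 'w, 'z2) leib_scheme \<Rightarrow> bool" where
  "leib_hom f L1 L2 \<longleftrightarrow> f ` lcarrier L1 \<subseteq> lcarrier L2 \<and>
     (\<forall>x\<in>lcarrier L1. \<forall>y\<in>lcarrier L1. f (ladd L1 x y) = ladd L2 (f x) (f y)) \<and>
     (\<forall>c. \<forall>x\<in>lcarrier L1. f (lsmul L1 c x) = lsmul L2 c (f x)) \<and>
     (\<forall>x\<in>lcarrier L1. \<forall>y\<in>lcarrier L1. f (lbr L1 x y) = lbr L2 (f x) (f y))"

definition leib_iso :: "('v \<Rightarrow> 'w) \<Rightarrow> ('k, 'v, 'z1) leib_scheme \<Rightarrow> ('k, 'w, 'z2) leib_scheme \<Rightarrow> bool" where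
  "leib_iso f L1 L2 \<longleftrightarrow> leib_hom f L1 L2 \<and> bij_betw f (lcarrier L1) (lcarrier L2)"

definition leib_isomorphic :: "('k, 'v, 'z1) leib_scheme \<Rightarrow> ('k, 'w, 'z2) leib_scheme \<Rightarrow> bool" where
  "leib_isomorphic L1 L2 \<longleftrightarrow> (\<exists>f. leib_iso f L1 L2)"

primrec lie_iter :: "('k, 'v, 'z) leib_scheme \<Rightarrow> (nat \<Rightarrow> 'v) \<Rightarrow> nat \<Rightarrow> 'v" where
  "lie_iter L xs 0 = xs 0"
| "lie_iter L xs (Suc k) = lie L (lie_iter L xs k) (xs (Suc k))"

text \<open>n-Lie-isoclinism (elements x_1..x_{n+1} are indexed 0..n here).\<close>
definition lie_isoclinic :: "nat \<Rightarrow> ('k, 'v) leib \<Rightarrow> ('k, 'w) leib \<Rightarrow> bool" where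
  "lie_isoclinic n L1 L2 \<longleftrightarrow>
    (\<exists>(\<eta> :: 'v set \<Rightarrow> 'w set) (\<xi> :: 'v \<Rightarrow> 'w).
       leib_iso \<eta> (quot L1 (zeta L1 n)) (quot L2 (zeta L2 n)) \<and>
       leib_iso \<xi> (sub L1 (gamma L1 (Suc n))) (sub L2 (gamma L2 (Suc n))) \<and>
       (\<forall>xs ys. (\<forall>i\<le>n. xs i \<in> lcarrier L1 \<and> ys i \<in> lcarrier L2 \<and>
                   \<eta> (coset L1 (zeta L1 n) (xs i)) = coset L2 (zeta L2 n) (ys i))
               \<longrightarrow> \<xi> (lie_iter L1 xs n) = lie_iter L2 ys n))"

end

theory Submission
  imports Defs
begin


definition span :: "('k, 'v, 'z) leib_scheme \<Rightarrow> 'v set \<Rightarrow> 'v set" where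
  "span L X = \<Inter>{S. subspace L S \<and> X \<subseteq> S}"

definition iters :: "('k, 'v, 'z) leib_scheme \<Rightarrow> nat \<Rightarrow> 'v set" where
  "iters L k = {lie_iter L xs k | xs. \<forall>i. xs i \<in> lcarrier L}"

lemma lie_iter_cong: "(\<forall>i\<le>k. xs i = ys i) \<Longrightarrow> lie_iter L xs k = lie_iter L ys k"
  by (induction k) auto

lemma lie_iter_shift:
  "lie_iter L xs (Suc k) = lie_iter L (\<lambda>i. if i = 0 then lie L (xs 0) (xs 1) else xs (Suc i)) k"
  by (induction k) auto

lemma gamma_SS: "gamma L (Suc (Suc k)) = ideal_gen L {lie L m x | m x. m \<in> gamma L (Suc k) \<and> x \<in> lcarrier L}"
  by (subst gamma.simps(2), simp del: gamma.simps add: lie_comm_def)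

lemma gamma_1[simp]: "gamma L (Suc 0) = lcarrier L" by simp
lemma gamma_0[simp]: "gamma L 0 = lcarrier L" by simp

declare gamma.simps[simp del]

definition closed :: "('k, 'v, 'z) leib_scheme \<Rightarrow> bool" where
  "closed A \<longleftrightarrow> (\<forall>x\<in>lcarrier A. \<forall>y\<in>lcarrier A. ladd A x y \<in> lcarrier A) \<and>
     (\<forall>c. \<forall>x\<in>lcarrier A. lsmul A c x \<in> lcarrier A) \<and>
     (\<forall>x\<in>lcarrier A. \<forall>y\<in>lcarrier A. lbr A x y \<in> lcarrier A)"

lemma closedD:
  assumes "closed A" "x \<in> lcarrier A" "y \<in> lcarrier A"
  shows "ladd A x y \<in> lcarrier A" "lsmul A c x \<in> lcarrier A" "lbr A x y \<in> lcarrier A"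
  using assms unfolding closed_def by blast+

lemma closed_lie: "closed A \<Longrightarrow> x \<in> lcarrier A \<Longrightarrow> y \<in> lcarrier A \<Longrightarrow> lie A x y \<in> lcarrier A"
  unfolding lie_def by (intro closedD) (auto intro: closedD)

lemma closed_lie_iter: "closed A \<Longrightarrow> (\<forall>i\<le>k. xs i \<in> lcarrier A) \<Longrightarrow> lie_iter A xs k \<in> lcarrier A"
  by (induction k) (auto intro: closed_lie)

lemma homD:
  assumes "leib_hom f A B" "x \<in> lcarrier A" "y \<in> lcarrier A"
  shows "f x \<in> lcarrier B" "f (ladd A x y) = ladd B (f x) (f y)" "f (lsmul A c x) = lsmul B c (f x)"
    "f (lbr A x y) = lbr B (f x) (f y)"
  using assms unfolding leib_hom_def by blast+

lemma hom_lie: "leib_hom f A B \<Longrightarrow> closed A \<Longrightarrow> x \<in> lcarrier A \<Longrightarrow> y \<in> lcarrier A \<Longrightarrow>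
   f (lie A x y) = lie B (f x) (f y)"
  unfolding lie_def by (simp add: homD closedD)

lemma hom_lie_iter: "leib_hom f A B \<Longrightarrow> closed A \<Longrightarrow> (\<forall>i\<le>k. xs i \<in> lcarrier A) \<Longrightarrow>
   f (lie_iter A xs k) = lie_iter B (\<lambda>i. f (xs i)) k"
proof (induction k)
  case (Suc k)
  then show ?case using hom_lie[OF Suc.prems(1,2) closed_lie_iter[OF Suc.prems(2)]] by simp
qed simp

lemma iso_inv:
  assumes iso: "leib_iso f A B" and cl: "closed A"
  shows "leib_iso (inv_into (lcarrier A) f) B A"
proof -
  let ?g = "inv_into (lcarrier A) f"
  have bij: "bij_betw f (lcarrier A) (lcarrier B)" and hom: "leib_hom f A B" using iso unfolding leib_iso_def by blast+
  have bij2: "bij_betw ?g (lcarrier B) (lcarrier A)" by (rule bij_betw_inv_into[OF bij])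
  have inj: "inj_on f (lcarrier A)" using bij unfolding bij_betw_def by blast
  have gA: "\<And>u. u \<in> lcarrier B \<Longrightarrow> ?g u \<in> lcarrier A" using bij2 bij_betwE by blast
  have fg: "\<And>u. u \<in> lcarrier B \<Longrightarrow> f (?g u) = u" using bij f_inv_into_f bij_betw_def by metis
  have gf: "\<And>x. x \<in> lcarrier A \<Longrightarrow> ?g (f x) = x" using inj inv_into_f_f by metis
  have "leib_hom ?g B A" unfolding leib_hom_def
  proof (intro conjI ballI allI)
    show "?g ` lcarrier B \<subseteq> lcarrier A" using gA by blast
    fix u v assume u: "u \<in> lcarrier B" and v: "v \<in> lcarrier B"
    have "ladd B u v = f (ladd A (?g u) (?g v))" using homD[OF hom gA[OF u] gA[OF v]] fg u v by simp
    then show "?g (ladd B u v) = ladd A (?g u) (?g v)" using gf closedD[OF cl gA[OF u] gA[OF v]] by simp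
    have "lbr B u v = f (lbr A (?g u) (?g v))" using homD[OF hom gA[OF u] gA[OF v]] fg u v by simp
    then show "?g (lbr B u v) = lbr A (?g u) (?g v)" using gf closedD[OF cl gA[OF u] gA[OF v]] by simp
  next
    fix c u assume u: "u \<in> lcarrier B"
    have "lsmul B c u = f (lsmul A c (?g u))" using homD[OF hom gA[OF u] gA[OF u]] fg u by simp
    then show "?g (lsmul B c u) = lsmul A c (?g u)" using gf closedD[OF cl gA[OF u] gA[OF u]] by simp
  qed
  then show ?thesis using bij2 unfolding leib_iso_def by blast
qed

lemma iso_comp:
  assumes f: "leib_iso f A B" and g: "leib_iso g B C"
  shows "leib_iso (g \<circ> f) A C"
proof -
  have hf: "leib_hom f A B" and hg: "leib_hom g B C" using f g unfolding leib_iso_def by blast+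
  have "leib_hom (g \<circ> f) A C" unfolding leib_hom_def
  proof (intro conjI ballI allI)
    show "(g \<circ> f) ` lcarrier A \<subseteq> lcarrier C" using hf hg unfolding leib_hom_def by auto
    fix x y assume x: "x \<in> lcarrier A" and y: "y \<in> lcarrier A"
    show "(g \<circ> f) (ladd A x y) = ladd C ((g \<circ> f) x) ((g \<circ> f) y)"
      using homD[OF hf x y] homD[OF hg homD(1)[OF hf x x] homD(1)[OF hf y y]] by simp
    show "(g \<circ> f) (lbr A x y) = lbr C ((g \<circ> f) x) ((g \<circ> f) y)"
      using homD[OF hf x y] homD[OF hg homD(1)[OF hf x x] homD(1)[OF hf y y]] by simp
  next
    fix c x assume x: "x \<in> lcarrier A"
    show "(g \<circ> f) (lsmul A c x) = lsmul C c ((g \<circ> f) x)"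
      using homD[OF hf x x] homD[OF hg homD(1)[OF hf x x] homD(1)[OF hf x x]] by simp
  qed
  moreover have "bij_betw (g \<circ> f) (lcarrier A) (lcarrier C)"
    using f g unfolding leib_iso_def by (meson bij_betw_trans)
  ultimately show ?thesis unfolding leib_iso_def by blast
qed

lemma hom_zero:
  assumes hom: "leib_hom f A B" and z: "lzero A \<in> lcarrier A"
    and sA: "lsmul A 0 (lzero A) = lzero A" and sB: "\<forall>x\<in>lcarrier B. lsmul B 0 x = lzero B"
  shows "f (lzero A) = lzero B"
proof -
  have "f (lzero A) = f (lsmul A 0 (lzero A))" using sA by simp
  also have "\<dots> = lsmul B 0 (f (lzero A))" using homD[OF hom z z] by simp
  also have "\<dots> = lzero B" using sB homD(1)[OF hom z z] by blast
  finally show ?thesis .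
qed

lemma sub_simps[simp]: "lcarrier (sub L S) = S" "ladd (sub L S) = ladd L" "lsmul (sub L S) = lsmul L"
  "lbr (sub L S) = lbr L" "lzero (sub L S) = lzero L" "lneg (sub L S) = lneg L"
  by (simp_all add: sub_def)

lemma closed_sub: "ideal L S \<Longrightarrow> closed (sub L S)"
  unfolding closed_def ideal_def subspace_def by (simp add: subset_iff)

lemma ball_img: "(\<forall>A\<in>f ` S. P A) \<longleftrightarrow> (\<forall>x\<in>S. P (f x))" by auto

locale LA =
  fixes L :: "('k::field, 'v, 'z) leib_scheme"
  assumes LA: "leibniz_algebra L"
begin

abbreviation V where "V \<equiv> lcarrier L"
abbreviation pl (infixl "\<oplus>" 65) where "x \<oplus> y \<equiv> ladd L x y"
abbreviation z0 ("\<zero>") where "\<zero> \<equiv> lzero L"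
abbreviation ng ("\<ominus> _" [81] 80) where "\<ominus> x \<equiv> lneg L x"
abbreviation sm (infixr "\<cdot>" 75) where "c \<cdot> x \<equiv> lsmul L c x"
abbreviation br ("\<lbrakk>_,_\<rbrakk>") where "\<lbrakk>x,y\<rbrakk> \<equiv> lbr L x y"

lemma
  zero_c[simp]: "\<zero> \<in> V" and
  add_c[simp]: "x \<in> V \<Longrightarrow> y \<in> V \<Longrightarrow> x \<oplus> y \<in> V" and
  neg_c[simp]: "x \<in> V \<Longrightarrow> \<ominus> x \<in> V" and
  smul_c[simp]: "x \<in> V \<Longrightarrow> c \<cdot> x \<in> V" and
  br_c[simp]: "x \<in> V \<Longrightarrow> y \<in> V \<Longrightarrow> \<lbrakk>x,y\<rbrakk> \<in> V" and
  add_assoc: "x \<in> V \<Longrightarrow> y \<in> V \<Longrightarrow> w \<in> V \<Longrightarrow> (x \<oplus> y) \<oplus> w = x \<oplus> (y \<oplus> w)" and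
  add_comm: "x \<in> V \<Longrightarrow> y \<in> V \<Longrightarrow> x \<oplus> y = y \<oplus> x" and
  zero_add[simp]: "x \<in> V \<Longrightarrow> \<zero> \<oplus> x = x" and
  neg_add[simp]: "x \<in> V \<Longrightarrow> (\<ominus> x) \<oplus> x = \<zero>" and
  smul_add: "x \<in> V \<Longrightarrow> y \<in> V \<Longrightarrow> c \<cdot> (x \<oplus> y) = c \<cdot> x \<oplus> c \<cdot> y" and
  add_smul: "x \<in> V \<Longrightarrow> (c + d) \<cdot> x = c \<cdot> x \<oplus> d \<cdot> x" and
  mult_smul: "x \<in> V \<Longrightarrow> (c * d) \<cdot> x = c \<cdot> (d \<cdot> x)" and
  one_smul[simp]: "x \<in> V \<Longrightarrow> 1 \<cdot> x = x" and
  br_add_l: "x \<in> V \<Longrightarrow> y \<in> V \<Longrightarrow> w \<in> V \<Longrightarrow> \<lbrakk>x \<oplus> y, w\<rbrakk> = \<lbrakk>x,w\<rbrakk> \<oplus> \<lbrakk>y,w\<rbrakk>" and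
  br_add_r: "x \<in> V \<Longrightarrow> y \<in> V \<Longrightarrow> w \<in> V \<Longrightarrow> \<lbrakk>x, y \<oplus> w\<rbrakk> = \<lbrakk>x,y\<rbrakk> \<oplus> \<lbrakk>x,w\<rbrakk>" and
  br_smul_l: "x \<in> V \<Longrightarrow> y \<in> V \<Longrightarrow> \<lbrakk>c \<cdot> x, y\<rbrakk> = c \<cdot> \<lbrakk>x,y\<rbrakk>" and
  br_smul_r: "x \<in> V \<Longrightarrow> y \<in> V \<Longrightarrow> \<lbrakk>x, c \<cdot> y\<rbrakk> = c \<cdot> \<lbrakk>x,y\<rbrakk>" and
  leib: "x \<in> V \<Longrightarrow> y \<in> V \<Longrightarrow> w \<in> V \<Longrightarrow> \<lbrakk>x,\<lbrakk>y,w\<rbrakk>\<rbrakk> = \<lbrakk>\<lbrakk>x,y\<rbrakk>,w\<rbrakk> \<oplus> \<ominus> \<lbrakk>\<lbrakk>x,w\<rbrakk>,y\<rbrakk>"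
  using LA unfolding leibniz_algebra_def Let_def by auto

lemma add_left_comm: "x \<in> V \<Longrightarrow> y \<in> V \<Longrightarrow> w \<in> V \<Longrightarrow> x \<oplus> (y \<oplus> w) = y \<oplus> (x \<oplus> w)"
  by (metis add_assoc add_comm)

lemmas add_ac = add_assoc add_comm add_left_comm

lemma add_zero[simp]: "x \<in> V \<Longrightarrow> x \<oplus> \<zero> = x" by (metis add_comm zero_add zero_c)
lemma add_neg[simp]: "x \<in> V \<Longrightarrow> x \<oplus> (\<ominus> x) = \<zero>" by (metis add_comm neg_add neg_c)
lemma neg_add_cancel[simp]: "x \<in> V \<Longrightarrow> y \<in> V \<Longrightarrow> (\<ominus> x) \<oplus> (x \<oplus> y) = y"
  by (simp flip: add_assoc)
lemma add_neg_cancel[simp]: "x \<in> V \<Longrightarrow> y \<in> V \<Longrightarrow> x \<oplus> ((\<ominus> x) \<oplus> y) = y"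
  by (simp flip: add_assoc)

lemma add_left_cancel: "x \<in> V \<Longrightarrow> y \<in> V \<Longrightarrow> w \<in> V \<Longrightarrow> x \<oplus> y = x \<oplus> w \<longleftrightarrow> y = w"
  by (metis neg_add_cancel neg_c)

lemma neg_unique: "x \<in> V \<Longrightarrow> y \<in> V \<Longrightarrow> x \<oplus> y = \<zero> \<Longrightarrow> y = \<ominus> x"
  by (metis add_neg add_left_cancel neg_c)

lemma neg_neg[simp]: "x \<in> V \<Longrightarrow> \<ominus> (\<ominus> x) = x"
  by (metis neg_add neg_c neg_unique)

lemma neg_distrib: "x \<in> V \<Longrightarrow> y \<in> V \<Longrightarrow> \<ominus> (x \<oplus> y) = \<ominus> x \<oplus> \<ominus> y"
proof -
  assume a: "x \<in> V" "y \<in> V"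
  have "(x \<oplus> y) \<oplus> (\<ominus> x \<oplus> \<ominus> y) = \<zero>" using a by (simp add: add_ac)
  thus ?thesis using a by (metis add_c neg_c neg_unique)
qed

lemma smul_zero_l[simp]: "x \<in> V \<Longrightarrow> 0 \<cdot> x = \<zero>"
  by (metis add_smul add_left_cancel add_zero smul_c zero_c add_0_left)


lemma smul_zero_r[simp]: "c \<cdot> \<zero> = \<zero>"
  by (metis add_left_cancel add_zero smul_add smul_c zero_add zero_c)

lemma neg_smul: "x \<in> V \<Longrightarrow> (-1) \<cdot> x = \<ominus> x"
  by (metis add_smul neg_unique one_smul smul_c smul_zero_l add.right_inverse)

lemma smul_neg: "x \<in> V \<Longrightarrow> c \<cdot> (\<ominus> x) = \<ominus> (c \<cdot> x)"
  by (metis mult.commute mult_smul neg_smul smul_c)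

lemma br_zero_l[simp]: "y \<in> V \<Longrightarrow> \<lbrakk>\<zero>,y\<rbrakk> = \<zero>"
  by (metis br_smul_l smul_zero_l zero_c br_c)
lemma br_zero_r[simp]: "x \<in> V \<Longrightarrow> \<lbrakk>x,\<zero>\<rbrakk> = \<zero>"
  by (metis br_smul_r smul_zero_l zero_c br_c)
lemma br_neg_l: "x \<in> V \<Longrightarrow> y \<in> V \<Longrightarrow> \<lbrakk>\<ominus> x,y\<rbrakk> = \<ominus> \<lbrakk>x,y\<rbrakk>"
  by (metis br_smul_l neg_smul br_c)
lemma br_neg_r: "x \<in> V \<Longrightarrow> y \<in> V \<Longrightarrow> \<lbrakk>x,\<ominus> y\<rbrakk> = \<ominus> \<lbrakk>x,y\<rbrakk>"
  by (metis br_smul_r neg_smul br_c)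
lemma neg_zero[simp]: "\<ominus> \<zero> = \<zero>" by (metis add_zero neg_add neg_c zero_c)

abbreviation lie' ("\<lbrace>_,_\<rbrace>") where "\<lbrace>x,y\<rbrace> \<equiv> lie L x y"

lemma lie_c[simp]: "x \<in> V \<Longrightarrow> y \<in> V \<Longrightarrow> \<lbrace>x,y\<rbrace> \<in> V" by (simp add: lie_def)
lemma lie_sym: "x \<in> V \<Longrightarrow> y \<in> V \<Longrightarrow> \<lbrace>x,y\<rbrace> = \<lbrace>y,x\<rbrace>" by (simp add: lie_def add_comm)
lemma lie_add_l: "x \<in> V \<Longrightarrow> y \<in> V \<Longrightarrow> w \<in> V \<Longrightarrow> \<lbrace>x \<oplus> y,w\<rbrace> = \<lbrace>x,w\<rbrace> \<oplus> \<lbrace>y,w\<rbrace>"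
  by (simp add: lie_def br_add_l br_add_r add_ac)
lemma lie_smul_l: "x \<in> V \<Longrightarrow> y \<in> V \<Longrightarrow> \<lbrace>c \<cdot> x,y\<rbrace> = c \<cdot> \<lbrace>x,y\<rbrace>"
  by (simp add: lie_def br_smul_l br_smul_r smul_add)
lemma lie_zero_l[simp]: "y \<in> V \<Longrightarrow> \<lbrace>\<zero>,y\<rbrace> = \<zero>" by (simp add: lie_def)

lemma br_lie_r: "a \<in> V \<Longrightarrow> x \<in> V \<Longrightarrow> y \<in> V \<Longrightarrow> \<lbrakk>a, \<lbrace>x,y\<rbrace>\<rbrakk> = \<zero>"
  by (simp add: lie_def br_add_r leib add_ac)


lemma subspace_neg: "subspace L S \<Longrightarrow> x \<in> S \<Longrightarrow> \<ominus> x \<in> S"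
  unfolding subspace_def by (metis neg_smul subsetD)

lemma subD_V: "subspace L S \<Longrightarrow> S \<subseteq> V" unfolding subspace_def by (elim conjE)
lemma subD_0: "subspace L S \<Longrightarrow> \<zero> \<in> S" unfolding subspace_def by (elim conjE)
lemma subD_add: "subspace L S \<Longrightarrow> x \<in> S \<Longrightarrow> y \<in> S \<Longrightarrow> x \<oplus> y \<in> S" unfolding subspace_def by (elim conjE) blast
lemma subD_smul: "subspace L S \<Longrightarrow> x \<in> S \<Longrightarrow> c \<cdot> x \<in> S" unfolding subspace_def by (elim conjE) blast
lemmas subD = subD_V subD_0 subD_add subD_smul

lemma subspace_V[simp]: "subspace L V" by (simp add: subspace_def)

lemma ideal_V[simp]: "ideal L V" by (simp add: ideal_def)

lemma ideal_subspace: "ideal L I \<Longrightarrow> subspace L I" by (simp add: ideal_def)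

lemma ideal_gen_ideal: "X \<subseteq> V \<Longrightarrow> ideal L (ideal_gen L X)"
  unfolding ideal_gen_def ideal_def subspace_def by auto

lemma ideal_gen_sub: "X \<subseteq> ideal_gen L X"
  unfolding ideal_gen_def by auto

lemma ideal_gen_least: "ideal L I \<Longrightarrow> X \<subseteq> I \<Longrightarrow> ideal_gen L X \<subseteq> I"
  unfolding ideal_gen_def by auto

lemma span_subspace: "X \<subseteq> V \<Longrightarrow> subspace L (span L X)"
  unfolding span_def subspace_def by auto

lemma span_sub: "X \<subseteq> span L X"
  unfolding span_def by auto

lemma span_least: "subspace L S \<Longrightarrow> X \<subseteq> S \<Longrightarrow> span L X \<subseteq> S"
  unfolding span_def by auto

lemma span_V: "span L V = V"
  using span_least[OF subspace_V, of V] span_sub[of V] by blast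

lemma lie_iter_c: "(\<forall>i\<le>k. xs i \<in> V) \<Longrightarrow> lie_iter L xs k \<in> V"
  by (induction k) auto

lemma iters_V: "iters L k \<subseteq> V"
  unfolding iters_def using lie_iter_c by blast

lemma iters_0: "iters L 0 = V"
proof
  show "iters L 0 \<subseteq> V" by (rule iters_V)
  show "V \<subseteq> iters L 0"
  proof
    fix x assume "x \<in> V"
    then show "x \<in> iters L 0" unfolding iters_def
      by (intro CollectI exI[of _ "\<lambda>_. x"]) simp
  qed
qed

lemma gamma_V: "gamma L k \<subseteq> V"
proof (induction k rule: nat_less_induct)
  case (1 k)
  show ?case
  proof (cases k)
    case (Suc i)
    show ?thesis
    proof (cases i)
      case (Suc j)
      have "gamma L (Suc j) \<subseteq> V" using 1 \<open>k = Suc i\<close> Suc by auto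
      then have "{lie L m x | m x. m \<in> gamma L (Suc j) \<and> x \<in> lcarrier L} \<subseteq> V"
        by (blast intro: lie_c)
      then have "ideal_gen L {lie L m x | m x. m \<in> gamma L (Suc j) \<and> x \<in> lcarrier L} \<subseteq> V"
        by (rule ideal_gen_least[OF ideal_V])
      then show ?thesis using gamma_SS[of L j] \<open>k = Suc i\<close> \<open>i = Suc j\<close> by simp
    qed (simp add: Suc)
  qed simp
qed

lemma lie_iter_gamma: "(\<forall>i\<le>k. xs i \<in> V) \<Longrightarrow> lie_iter L xs k \<in> gamma L (Suc k)"
proof (induction k)
  case (Suc k)
  have "\<forall>i\<le>k. xs i \<in> V" using Suc.prems by simp
  then have m: "lie_iter L xs k \<in> gamma L (Suc k)" using Suc.IH by blast
  have x: "xs (Suc k) \<in> V" using Suc.prems by blast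
  note g = gamma_SS[of L k]
  have "lie L (lie_iter L xs k) (xs (Suc k)) \<in> {lie L m x | m x. m \<in> gamma L (Suc k) \<and> x \<in> lcarrier L}"
    using m x by blast
  then have "lie L (lie_iter L xs k) (xs (Suc k)) \<in> gamma L (Suc (Suc k))"
    unfolding g by (rule subsetD[OF ideal_gen_sub])
  then show ?case by simp
qed simp

lemma iter_extend: "lie L (lie_iter L xs k) a = lie_iter L (xs(Suc k := a)) (Suc k)"
proof -
  have "lie_iter L (xs(Suc k := a)) k = lie_iter L xs k"
    by (rule lie_iter_cong) simp
  then show ?thesis by simp
qed

lemma iters_lie: "w \<in> iters L k \<Longrightarrow> a \<in> V \<Longrightarrow> lie L w a \<in> iters L (Suc k)"
proof -
  assume "w \<in> iters L k" and a: "a \<in> V"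
  then obtain xs where w: "w = lie_iter L xs k" and xs: "\<forall>i. xs i \<in> V"
    unfolding iters_def by blast
  have "\<forall>i. (xs(Suc k := a)) i \<in> V" using xs a by simp
  moreover have "lie L w a = lie_iter L (xs(Suc k := a)) (Suc k)" using w iter_extend by simp
  ultimately show ?thesis unfolding iters_def by blast
qed

lemma iters_Suc_sub: "iters L (Suc k) \<subseteq> iters L k"
proof
  fix w assume "w \<in> iters L (Suc k)"
  then obtain xs where w: "w = lie_iter L xs (Suc k)" and xs: "\<forall>i. xs i \<in> V"
    unfolding iters_def by blast
  let ?ys = "\<lambda>i. if i = 0 then lie L (xs 0) (xs 1) else xs (Suc i)"
  have "\<forall>i. ?ys i \<in> V" using xs by auto
  moreover have "w = lie_iter L ?ys k" unfolding w by (rule lie_iter_shift)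
  ultimately show "w \<in> iters L k" unfolding iters_def by blast
qed

lemma iters_Suc_lie: "w \<in> iters L (Suc k) \<Longrightarrow> \<exists>u\<in>V. \<exists>v\<in>V. w = lie L u v"
proof -
  assume "w \<in> iters L (Suc k)"
  then obtain xs where w: "w = lie_iter L xs (Suc k)" and xs: "\<forall>i. xs i \<in> V"
    unfolding iters_def by blast
  have "lie_iter L xs k \<in> V" using xs lie_iter_c by blast
  then show ?thesis using w xs by auto
qed

lemma span_ideal: "ideal L (span L (iters L (Suc k)))"
proof -
  let ?S = "span L (iters L (Suc k))"
  have sS: "subspace L ?S" using span_subspace iters_V by blast
  let ?R = "{w \<in> V. \<forall>a\<in>V. \<lbrakk>a,w\<rbrakk> = \<zero>}"
  have sR: "subspace L ?R" unfolding subspace_def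
    by (auto simp: br_add_r br_smul_r)
  have "iters L (Suc k) \<subseteq> ?R" using iters_Suc_lie br_lie_r by fastforce
  then have SR: "?S \<subseteq> ?R" using span_least sR by blast
  have T: "\<And>a. a \<in> V \<Longrightarrow> ?S \<subseteq> {w \<in> V. lie L w a \<in> ?S}"
  proof -
    fix a assume a: "a \<in> V"
    have "subspace L {w \<in> V. lie L w a \<in> ?S}"
      using sS a unfolding subspace_def by (auto simp: lie_add_l lie_smul_l)
    moreover have "iters L (Suc k) \<subseteq> {w \<in> V. lie L w a \<in> ?S}"
      using iters_lie[OF _ a] iters_Suc_sub span_sub iters_V by blast
    ultimately show "?S \<subseteq> {w \<in> V. lie L w a \<in> ?S}" using span_least by blast
  qed
  have eq: "\<And>a w. a \<in> V \<Longrightarrow> w \<in> ?S \<Longrightarrow> \<lbrakk>w,a\<rbrakk> = lie L w a"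
    using SR by (auto simp: lie_def)
  show ?thesis unfolding ideal_def
  proof (intro conjI ballI)
    show "subspace L ?S" by (rule sS)
    fix x i assume x: "x \<in> V" and i: "i \<in> ?S"
    have "\<lbrakk>x,i\<rbrakk> = \<zero>" using SR x i by blast
    moreover have "\<zero> \<in> ?S" using sS by (rule subD_0)
    ultimately show "\<lbrakk>x,i\<rbrakk> \<in> ?S" by simp
    have "lie L i x \<in> ?S" using T[OF x] i by blast
    then show "\<lbrakk>i,x\<rbrakk> \<in> ?S" using eq[OF x i] by simp
  qed
qed

lemma gamma_span: "gamma L (Suc k) = span L (iters L k)"
proof (induction k)
  case 0
  then show ?case by (simp add: iters_0 span_V)
next
  case (Suc k)
  let ?G = "{lie L m x | m x. m \<in> gamma L (Suc k) \<and> x \<in> lcarrier L}"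
  note g = gamma_SS[of L k]
  have sS: "subspace L (span L (iters L (Suc k)))" using span_subspace iters_V by blast
  have "?G \<subseteq> span L (iters L (Suc k))"
  proof
    fix w assume "w \<in> ?G"
    then obtain m x where w: "w = lie L m x" and m0: "m \<in> gamma L (Suc k)" and x: "x \<in> V"
      by blast
    have m: "m \<in> span L (iters L k)" using m0 Suc.IH by simp
    have "subspace L {m \<in> V. lie L m x \<in> span L (iters L (Suc k))}"
      using sS x unfolding subspace_def by (auto simp: lie_add_l lie_smul_l)
    moreover have "iters L k \<subseteq> {m \<in> V. lie L m x \<in> span L (iters L (Suc k))}"
      using iters_lie[OF _ x] span_sub iters_V by blast
    ultimately show "w \<in> span L (iters L (Suc k))" using span_least m w by blast
  qed
  then have "gamma L (Suc (Suc k)) \<subseteq> span L (iters L (Suc k))"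
    unfolding g by (rule ideal_gen_least[OF span_ideal])
  moreover have "span L (iters L (Suc k)) \<subseteq> gamma L (Suc (Suc k))"
  proof (rule span_least)
    have "?G \<subseteq> V" using gamma_V by (blast intro: lie_c)
    then show "subspace L (gamma L (Suc (Suc k)))" unfolding g by (rule ideal_subspace[OF ideal_gen_ideal])
    show "iters L (Suc k) \<subseteq> gamma L (Suc (Suc k))"
    proof
      fix w assume "w \<in> iters L (Suc k)"
      then obtain xs where w: "w = lie_iter L xs (Suc k)" and xs: "\<forall>i. xs i \<in> V" unfolding iters_def by blast
      have "lie_iter L xs (Suc k) \<in> gamma L (Suc (Suc k))" by (rule lie_iter_gamma) (use xs in blast)
      then show "w \<in> gamma L (Suc (Suc k))" unfolding w .
    qed
  qed
  ultimately show ?case by blast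
qed


lemma ac_aux: "A \<in> V \<Longrightarrow> B \<in> V \<Longrightarrow> C \<in> V \<Longrightarrow> D \<in> V \<Longrightarrow>
   (A \<oplus> B) \<oplus> ((\<ominus> A \<oplus> C) \<oplus> \<ominus> D) = C \<oplus> (B \<oplus> \<ominus> D)"
proof -
  assume v: "A \<in> V" "B \<in> V" "C \<in> V" "D \<in> V"
  have "(A \<oplus> B) \<oplus> ((\<ominus> A \<oplus> C) \<oplus> \<ominus> D) = A \<oplus> (\<ominus> A \<oplus> (C \<oplus> (B \<oplus> \<ominus> D)))"
    using v by (simp add: add_ac)
  also have "\<dots> = C \<oplus> (B \<oplus> \<ominus> D)" using v by simp
  finally show ?thesis .
qed

lemma key_identity:
  assumes z: "z \<in> V" and a: "a \<in> V" and y: "y \<in> V"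
  shows "lie L \<lbrakk>z,a\<rbrakk> y = \<lbrakk>lie L z y, a\<rbrakk> \<oplus> \<ominus> lie L z \<lbrakk>y,a\<rbrakk>"
proof -
  have l: "lie L \<lbrakk>z,a\<rbrakk> y = \<lbrakk>\<lbrakk>z,a\<rbrakk>,y\<rbrakk> \<oplus> (\<lbrakk>\<lbrakk>y,z\<rbrakk>,a\<rbrakk> \<oplus> \<ominus> \<lbrakk>\<lbrakk>y,a\<rbrakk>,z\<rbrakk>)"
    unfolding lie_def using leib[OF y z a] by simp
  have r1: "\<lbrakk>lie L z y, a\<rbrakk> = \<lbrakk>\<lbrakk>z,y\<rbrakk>,a\<rbrakk> \<oplus> \<lbrakk>\<lbrakk>y,z\<rbrakk>,a\<rbrakk>"
    unfolding lie_def using z a y by (simp add: br_add_l)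
  have r2: "\<ominus> lie L z \<lbrakk>y,a\<rbrakk> = (\<ominus> \<lbrakk>\<lbrakk>z,y\<rbrakk>,a\<rbrakk> \<oplus> \<lbrakk>\<lbrakk>z,a\<rbrakk>,y\<rbrakk>) \<oplus> \<ominus> \<lbrakk>\<lbrakk>y,a\<rbrakk>,z\<rbrakk>"
    unfolding lie_def using z a y by (simp add: leib neg_distrib)
  show ?thesis unfolding l r1 r2 using z a y by (simp add: ac_aux)
qed

lemma zeta_sub: "subspace L (zeta L k)"
proof (induction k)
  case 0
  then show ?case by (simp add: subspace_def)
next
  case (Suc k)
  note IH = Suc.IH[unfolded subspace_def]
  show ?case unfolding subspace_def
  proof (intro conjI ballI allI)
    show "zeta L (Suc k) \<subseteq> V" by auto
    show "\<zero> \<in> zeta L (Suc k)" using IH by simp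
    fix x y assume x: "x \<in> zeta L (Suc k)" and y: "y \<in> zeta L (Suc k)"
    have "\<forall>w\<in>V. lie L (x \<oplus> y) w \<in> zeta L k"
    proof
      fix w assume w: "w \<in> V"
      have "lie L x w \<in> zeta L k" "lie L y w \<in> zeta L k" "x \<in> V" "y \<in> V" using x y w by auto
      then show "lie L (x \<oplus> y) w \<in> zeta L k" using IH w by (simp add: lie_add_l)
    qed
    then show "x \<oplus> y \<in> zeta L (Suc k)" using x y by simp
  next
    fix c x assume x: "x \<in> zeta L (Suc k)"
    have "\<forall>w\<in>V. lie L (c \<cdot> x) w \<in> zeta L k"
    proof
      fix w assume w: "w \<in> V"
      have "lie L x w \<in> zeta L k" "x \<in> V" using x w by auto
      then show "lie L (c \<cdot> x) w \<in> zeta L k" using IH w by (simp add: lie_smul_l)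
    qed
    then show "c \<cdot> x \<in> zeta L (Suc k)" using x by simp
  qed
qed

lemma zeta_V: "zeta L k \<subseteq> V" using zeta_sub[of k] unfolding subspace_def by (elim conjE)

lemma zeta_mono: "zeta L k \<subseteq> zeta L (Suc k)"
proof (induction k)
  case 0
  then show ?case by simp
next
  case (Suc k)
  then show ?case by auto
qed

lemma zeta_ideal: "ideal L (zeta L k)"
proof (induction k)
  case 0
  then show ?case by (simp add: ideal_def subspace_def)
next
  case (Suc k)
  have sk: "subspace L (zeta L k)" by (rule zeta_sub)
  show ?case unfolding ideal_def
  proof (intro conjI ballI)
    show "subspace L (zeta L (Suc k))" by (rule zeta_sub)
    fix a z assume a: "a \<in> V" and zz: "z \<in> zeta L (Suc k)"
    have z: "z \<in> V" using zz by simp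
    have zl: "\<And>y. y \<in> V \<Longrightarrow> lie L z y \<in> zeta L k" using zz by simp
    show za: "\<lbrakk>z,a\<rbrakk> \<in> zeta L (Suc k)"
    proof (simp add: z a, intro ballI)
      fix y assume y: "y \<in> V"
      have "\<lbrakk>lie L z y, a\<rbrakk> \<in> zeta L k" using Suc.IH zl[OF y] a unfolding ideal_def by blast
      moreover have "\<ominus> lie L z \<lbrakk>y,a\<rbrakk> \<in> zeta L k" using zl[of "\<lbrakk>y,a\<rbrakk>"] y a subspace_neg[OF sk] by simp
      ultimately show "lie L \<lbrakk>z,a\<rbrakk> y \<in> zeta L k" using key_identity[OF z a y] sk
        unfolding subspace_def by simp
    qed
    have "lie L z a \<in> zeta L (Suc k)" using zl[OF a] zeta_mono by blast
    moreover have "\<ominus> \<lbrakk>z,a\<rbrakk> \<in> zeta L (Suc k)" using za subspace_neg[OF zeta_sub] by blast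
    moreover have "\<lbrakk>a,z\<rbrakk> = lie L z a \<oplus> \<ominus> \<lbrakk>z,a\<rbrakk>"
      using a z by (simp add: lie_def add_ac)
    ultimately show "\<lbrakk>a,z\<rbrakk> \<in> zeta L (Suc k)" using zeta_sub[of "Suc k"] unfolding subspace_def by metis
  qed
qed


lemma span_ann: "w \<in> span L (iters L (Suc k)) \<Longrightarrow> a \<in> V \<Longrightarrow> \<lbrakk>a,w\<rbrakk> = \<zero>"
proof -
  let ?R = "{w \<in> V. \<forall>a\<in>V. \<lbrakk>a,w\<rbrakk> = \<zero>}"
  have sR: "subspace L ?R" unfolding subspace_def
    by (auto simp: br_add_r br_smul_r)
  have "iters L (Suc k) \<subseteq> ?R" using iters_Suc_lie br_lie_r by fastforce
  then have SR: "span L (iters L (Suc k)) \<subseteq> ?R" using span_least sR by blast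
  assume "w \<in> span L (iters L (Suc k))" "a \<in> V"
  then show ?thesis using SR by blast
qed

lemma iters_mono: "k \<le> m \<Longrightarrow> iters L m \<subseteq> iters L k"
proof (induction m)
  case (Suc m)
  then show ?case using iters_Suc_sub[of m] by (metis le_Suc_eq order_refl subset_trans)
qed simp

lemma gamma_anti: "1 \<le> n \<Longrightarrow> gamma L (Suc n) \<subseteq> gamma L (Suc (Suc 0))"
proof -
  assume n: "1 \<le> n"
  have "iters L n \<subseteq> iters L 1" by (rule iters_mono[OF n])
  then have "span L (iters L n) \<subseteq> span L (iters L 1)"
    using span_least[OF span_subspace[OF iters_V]] span_sub by (meson subset_trans)
  then show ?thesis using gamma_span[of n] gamma_span[of 1] by simp
qed

lemma Z1_gamma2:
  assumes fr: "frattini L = {\<zero>}" and z1: "z \<in> zeta L (Suc 0)" and z2: "z \<in> gamma L (Suc (Suc 0))"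
  shows "z = \<zero>"
proof (rule ccontr)
  assume nz: "z \<noteq> \<zero>"
  have z: "z \<in> V" using z1 by simp
  have ann: "\<And>a. a \<in> V \<Longrightarrow> \<lbrakk>a,z\<rbrakk> = \<zero>"
    using span_ann z2 gamma_span[of 1] by simp
  have lz: "\<And>a. a \<in> V \<Longrightarrow> \<lbrakk>z,a\<rbrakk> \<oplus> \<lbrakk>a,z\<rbrakk> = \<zero>" using z1 by (simp add: lie_def)
  have zl: "\<And>a. a \<in> V \<Longrightarrow> \<lbrakk>z,a\<rbrakk> = \<zero>" using lz ann by (metis add_zero br_c z)
  have "z \<notin> frattini L" using nz fr by blast
  then obtain M where M: "maximal_subalgebra L M" and zM: "z \<notin> M"
    using z unfolding frattini_def by blast
  have sM: "subalgebra L M" and MV: "M \<noteq> V" and mx: "\<And>N. subalgebra L N \<Longrightarrow> M \<subseteq> N \<Longrightarrow> N = M \<or> N = V"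
    using M unfolding maximal_subalgebra_def by blast+
  have Msub: "M \<subseteq> V" and M0: "\<zero> \<in> M" and Madd: "\<And>x y. x \<in> M \<Longrightarrow> y \<in> M \<Longrightarrow> x \<oplus> y \<in> M"
    and Msm: "\<And>c x. x \<in> M \<Longrightarrow> c \<cdot> x \<in> M" and Mbr: "\<And>x y. x \<in> M \<Longrightarrow> y \<in> M \<Longrightarrow> \<lbrakk>x,y\<rbrakk> \<in> M"
    using sM unfolding subalgebra_def subspace_def by blast+
  define N where "N = {m \<oplus> c \<cdot> z | m c. m \<in> M}"
  have brN: "\<And>m c m' c'. m \<in> M \<Longrightarrow> m' \<in> M \<Longrightarrow> \<lbrakk>m \<oplus> c \<cdot> z, m' \<oplus> c' \<cdot> z\<rbrakk> = \<lbrakk>m,m'\<rbrakk>"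
  proof -
    fix m c m' c' assume m: "m \<in> M" and m': "m' \<in> M"
    have mv: "m \<in> V" "m' \<in> V" using m m' Msub by auto
    have "\<lbrakk>m \<oplus> c \<cdot> z, m' \<oplus> c' \<cdot> z\<rbrakk> = \<lbrakk>m, m' \<oplus> c' \<cdot> z\<rbrakk> \<oplus> \<lbrakk>c \<cdot> z, m' \<oplus> c' \<cdot> z\<rbrakk>"
      using mv z by (simp add: br_add_l)
    also have "\<lbrakk>c \<cdot> z, m' \<oplus> c' \<cdot> z\<rbrakk> = \<zero>" using mv z zl by (simp add: br_smul_l)
    also have "\<lbrakk>m, m' \<oplus> c' \<cdot> z\<rbrakk> = \<lbrakk>m,m'\<rbrakk>" using mv z ann by (simp add: br_add_r br_smul_r)
    finally show "\<lbrakk>m \<oplus> c \<cdot> z, m' \<oplus> c' \<cdot> z\<rbrakk> = \<lbrakk>m,m'\<rbrakk>" using mv by simp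
  qed
  have NV: "N \<subseteq> V" unfolding N_def using Msub z by auto
  have sN: "subalgebra L N" unfolding subalgebra_def subspace_def
  proof (intro conjI ballI allI)
    show "N \<subseteq> V" by (rule NV)
    have "\<zero> = \<zero> \<oplus> 0 \<cdot> z" using z by simp
    then show "\<zero> \<in> N" unfolding N_def using M0 by blast
    fix x y assume "x \<in> N" "y \<in> N"
    then obtain m c m' c' where x: "x = m \<oplus> c \<cdot> z" and y: "y = m' \<oplus> c' \<cdot> z" and m: "m \<in> M" "m' \<in> M"
      unfolding N_def by blast
    have mv: "m \<in> V" "m' \<in> V" using m Msub by auto
    have "x \<oplus> y = (m \<oplus> m') \<oplus> (c + c') \<cdot> z" unfolding x y using mv z by (simp add: add_smul add_ac)
    then show "x \<oplus> y \<in> N" unfolding N_def using Madd m by blast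
    have "\<lbrakk>x,y\<rbrakk> = \<lbrakk>m,m'\<rbrakk> \<oplus> 0 \<cdot> z" unfolding x y using brN m mv z by simp
    then show "\<lbrakk>x,y\<rbrakk> \<in> N" unfolding N_def using Mbr m by blast
  next
    fix d x assume "x \<in> N"
    then obtain m c where x: "x = m \<oplus> c \<cdot> z" and m: "m \<in> M" unfolding N_def by blast
    have mv: "m \<in> V" using m Msub by auto
    have "d \<cdot> x = d \<cdot> m \<oplus> (d * c) \<cdot> z" unfolding x using mv z by (simp add: smul_add mult_smul)
    then show "d \<cdot> x \<in> N" unfolding N_def using Msm m by blast
  qed
  have MN: "M \<subseteq> N"
  proof
    fix m assume m: "m \<in> M"
    then have "m = m \<oplus> 0 \<cdot> z" using Msub z by auto
    then show "m \<in> N" unfolding N_def using m by blast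
  qed
  have zN: "z \<in> N"
  proof -
    have "z = \<zero> \<oplus> 1 \<cdot> z" using z by simp
    then show ?thesis unfolding N_def using M0 by blast
  qed
  have "N = V" using mx[OF sN MN] zN zM by blast
  then have allbr: "\<And>u v. u \<in> V \<Longrightarrow> v \<in> V \<Longrightarrow> \<lbrakk>u,v\<rbrakk> \<in> M"
  proof -
    fix u v assume "N = V" "u \<in> V" "v \<in> V"
    then obtain m c m' c' where "u = m \<oplus> c \<cdot> z" "v = m' \<oplus> c' \<cdot> z" "m \<in> M" "m' \<in> M"
      unfolding N_def by blast
    then show "\<lbrakk>u,v\<rbrakk> \<in> M" using brN Mbr by simp
  qed
  have iM: "ideal L M" unfolding ideal_def using sM allbr Msub unfolding subalgebra_def by blast
  have "{lie L m x | m x. m \<in> gamma L (Suc 0) \<and> x \<in> lcarrier L} \<subseteq> M"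
    using allbr Madd by (auto simp: lie_def)
  then have "gamma L (Suc (Suc 0)) \<subseteq> M" unfolding gamma_SS by (rule ideal_gen_least[OF iM])
  then show False using z2 zM by blast
qed


section \<open>cosets\<close>

lemma coset_V: assumes "subspace L I" "x \<in> V" shows "coset L I x \<subseteq> V"
proof
  fix a assume "a \<in> coset L I x"
  then obtain i where "a = x \<oplus> i" "i \<in> I" unfolding coset_def by blast
  then show "a \<in> V" using subD_V[OF assms(1)] assms(2) by auto
qed

lemma coset_self: "subspace L I \<Longrightarrow> x \<in> V \<Longrightarrow> x \<in> coset L I x"
proof -
  assume "subspace L I" "x \<in> V"
  then have "\<zero> \<in> I" "x = x \<oplus> \<zero>" using subD by auto
  then show ?thesis unfolding coset_def by (intro image_eqI[where f="ladd L x" and x=\<zero>]) auto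
qed

lemma in_coset: assumes sI: "subspace L I" and x: "x \<in> V"
  shows "a \<in> coset L I x \<longleftrightarrow> a \<in> V \<and> \<ominus> x \<oplus> a \<in> I"
proof
  have IV: "I \<subseteq> V" using sI by (rule subD_V)
  {
    assume "a \<in> coset L I x"
    then obtain i where a: "a = x \<oplus> i" and i: "i \<in> I" unfolding coset_def by blast
    have iv: "i \<in> V" using i IV by blast
    have "\<ominus> x \<oplus> a = i" unfolding a using x iv by simp
    then show "a \<in> V \<and> \<ominus> x \<oplus> a \<in> I" using x iv i a by simp
  }
  {
    assume h: "a \<in> V \<and> \<ominus> x \<oplus> a \<in> I"
    have e: "a = x \<oplus> (\<ominus> x \<oplus> a)" using x h by simp
    have m: "\<ominus> x \<oplus> a \<in> I" using h by blast
    show "a \<in> coset L I x" unfolding coset_def by (rule image_eqI[where f="ladd L x", OF e m])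
  }
qed

lemma coset_eq: assumes sI: "subspace L I" and x: "x \<in> V" and y: "y \<in> V"
  shows "coset L I x = coset L I y \<longleftrightarrow> \<ominus> x \<oplus> y \<in> I"
proof
  have IV: "I \<subseteq> V" using sI by (rule subD_V)
  have Iadd: "\<And>a b. a \<in> I \<Longrightarrow> b \<in> I \<Longrightarrow> a \<oplus> b \<in> I" using sI by (rule subD_add)
  {
    assume "coset L I x = coset L I y"
    then have "y \<in> coset L I x" using coset_self[OF sI y] by simp
    then show "\<ominus> x \<oplus> y \<in> I" using in_coset[OF sI x] by blast
  }
  {
    assume xy: "\<ominus> x \<oplus> y \<in> I"
    have yx: "\<ominus> y \<oplus> x \<in> I"
    proof -
      have "\<ominus> (\<ominus> x \<oplus> y) = \<ominus> y \<oplus> x" using x y by (simp add: neg_distrib add_comm)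
      then show ?thesis using subspace_neg[OF sI xy] by simp
    qed
    show "coset L I x = coset L I y"
    proof (intro set_eqI iffI)
      fix a assume "a \<in> coset L I x"
      then have a: "a \<in> V" "\<ominus> x \<oplus> a \<in> I" using in_coset[OF sI x] by auto
      have e: "\<ominus> y \<oplus> a = (\<ominus> y \<oplus> x) \<oplus> (\<ominus> x \<oplus> a)" using a x y by (simp add: add_assoc)
      have "\<ominus> y \<oplus> a \<in> I" unfolding e by (rule Iadd[OF yx a(2)])
      then show "a \<in> coset L I y" using in_coset[OF sI y] a by blast
    next
      fix a assume "a \<in> coset L I y"
      then have a: "a \<in> V" "\<ominus> y \<oplus> a \<in> I" using in_coset[OF sI y] by auto
      have e: "\<ominus> x \<oplus> a = (\<ominus> x \<oplus> y) \<oplus> (\<ominus> y \<oplus> a)" using a x y by (simp add: add_assoc)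
      have "\<ominus> x \<oplus> a \<in> I" unfolding e by (rule Iadd[OF xy a(2)])
      then show "a \<in> coset L I x" using in_coset[OF sI x] a by blast
    qed
  }
qed

lemma coset_zero: assumes sI: "subspace L I" shows "coset L I \<zero> = I"
proof -
  have "ladd L \<zero> ` I = (\<lambda>x. x) ` I" using subD_V[OF sI] by (intro image_cong) auto
  then show ?thesis unfolding coset_def by simp
qed

lemma coset_mem: "subspace L I \<Longrightarrow> i \<in> I \<Longrightarrow> coset L I i = I"
proof -
  assume sI: "subspace L I" and i: "i \<in> I"
  have iV: "i \<in> V" using subD_V[OF sI] i by blast
  have "\<ominus> \<zero> \<oplus> i \<in> I" using i iV by simp
  then have "coset L I \<zero> = coset L I i" using coset_eq[OF sI zero_c iV] by blast
  then show ?thesis using coset_zero[OF sI] by simp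
qed

lemma cosetI: "i \<in> I \<Longrightarrow> x \<oplus> i \<in> coset L I x"
  unfolding coset_def by (rule imageI)

lemma cosetE: "a \<in> coset L I x \<Longrightarrow> (\<And>i. a = x \<oplus> i \<Longrightarrow> i \<in> I \<Longrightarrow> P) \<Longrightarrow> P"
  unfolding coset_def by blast

lemma cosetI': "i \<in> I \<Longrightarrow> a = x \<oplus> i \<Longrightarrow> a \<in> coset L I x"
  using cosetI by simp

lemma q_add_set: assumes sI: "subspace L I" and x: "x \<in> V" and y: "y \<in> V"
  shows "{a \<oplus> b | a b. a \<in> coset L I x \<and> b \<in> coset L I y} = coset L I (x \<oplus> y)"
proof -
  have IV: "I \<subseteq> V" and I0: "\<zero> \<in> I" and Iadd: "\<And>a b. a \<in> I \<Longrightarrow> b \<in> I \<Longrightarrow> a \<oplus> b \<in> I"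
    using subD[OF sI] by auto
  show ?thesis
  proof (intro set_eqI iffI)
    fix w assume "w \<in> {a \<oplus> b | a b. a \<in> coset L I x \<and> b \<in> coset L I y}"
    then obtain a b where w: "w = a \<oplus> b" and ab: "a \<in> coset L I x" "b \<in> coset L I y" by blast
    obtain i where a: "a = x \<oplus> i" and i: "i \<in> I" using ab(1) by (rule cosetE)
    obtain j where b: "b = y \<oplus> j" and j: "j \<in> I" using ab(2) by (rule cosetE)
    have iv: "i \<in> V" "j \<in> V" using i j IV by auto
    have "w = (x \<oplus> y) \<oplus> (i \<oplus> j)" unfolding w a b using iv x y by (simp add: add_ac)
    then show "w \<in> coset L I (x \<oplus> y)" by (rule cosetI'[OF Iadd[OF i j]])
  next
    fix w assume "w \<in> coset L I (x \<oplus> y)"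
    then obtain i where w: "w = (x \<oplus> y) \<oplus> i" and i: "i \<in> I" by (rule cosetE)
    have iv: "i \<in> V" using i IV by auto
    have "w = (x \<oplus> i) \<oplus> (y \<oplus> \<zero>)" unfolding w using iv x y by (simp add: add_ac)
    moreover have "x \<oplus> i \<in> coset L I x" "y \<oplus> \<zero> \<in> coset L I y" using i I0 by (auto intro: cosetI)
    ultimately show "w \<in> {a \<oplus> b | a b. a \<in> coset L I x \<and> b \<in> coset L I y}" by blast
  qed
qed

lemma q_smul_set: assumes sI: "subspace L I" and x: "x \<in> V"
  shows "{c \<cdot> a \<oplus> i | a i. a \<in> coset L I x \<and> i \<in> I} = coset L I (c \<cdot> x)"
proof -
  have IV: "I \<subseteq> V" and I0: "\<zero> \<in> I" and Iadd: "\<And>a b. a \<in> I \<Longrightarrow> b \<in> I \<Longrightarrow> a \<oplus> b \<in> I"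
    and Ism: "\<And>c a. a \<in> I \<Longrightarrow> c \<cdot> a \<in> I"
    using subD[OF sI] by auto
  show ?thesis
  proof (intro set_eqI iffI)
    fix w assume "w \<in> {c \<cdot> a \<oplus> i | a i. a \<in> coset L I x \<and> i \<in> I}"
    then obtain a j where w: "w = c \<cdot> a \<oplus> j" and a: "a \<in> coset L I x" and j: "j \<in> I" by blast
    obtain i where a: "a = x \<oplus> i" and i: "i \<in> I" using a by (rule cosetE)
    have iv: "i \<in> V" "j \<in> V" using i j IV by auto
    have "w = c \<cdot> x \<oplus> (c \<cdot> i \<oplus> j)" unfolding w a using iv x by (simp add: add_ac smul_add)
    then show "w \<in> coset L I (c \<cdot> x)" by (rule cosetI'[OF Iadd[OF Ism[OF i] j]])
  next
    fix w assume "w \<in> coset L I (c \<cdot> x)"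
    then obtain i where w: "w = c \<cdot> x \<oplus> i" and i: "i \<in> I" by (rule cosetE)
    moreover have "x \<in> coset L I x" using coset_self[OF sI x] .
    ultimately show "w \<in> {c \<cdot> a \<oplus> i | a i. a \<in> coset L I x \<and> i \<in> I}" by blast
  qed
qed

lemma q_neg_set: assumes sI: "subspace L I" and x: "x \<in> V"
  shows "lneg L ` coset L I x = coset L I (\<ominus> x)"
proof -
  have IV: "I \<subseteq> V" using subD_V[OF sI] .
  show ?thesis
  proof (intro set_eqI iffI)
    fix w assume "w \<in> lneg L ` coset L I x"
    then obtain a where w: "w = \<ominus> a" and a: "a \<in> coset L I x" by blast
    obtain i where a: "a = x \<oplus> i" and i: "i \<in> I" using a by (rule cosetE)
    have iv: "i \<in> V" using i IV by auto
    have "w = \<ominus> x \<oplus> \<ominus> i" unfolding w a using iv x by (simp add: neg_distrib)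
    then show "w \<in> coset L I (\<ominus> x)" by (rule cosetI'[OF subspace_neg[OF sI i]])
  next
    fix w assume "w \<in> coset L I (\<ominus> x)"
    then obtain i where w: "w = \<ominus> x \<oplus> i" and i: "i \<in> I" by (rule cosetE)
    have iv: "i \<in> V" using i IV by auto
    have "w = \<ominus> (x \<oplus> \<ominus> i)" unfolding w using iv x by (simp add: neg_distrib)
    moreover have "x \<oplus> \<ominus> i \<in> coset L I x" by (rule cosetI[OF subspace_neg[OF sI i]])
    ultimately show "w \<in> lneg L ` coset L I x" by blast
  qed
qed

lemma q_br_set: assumes iI: "ideal L I" and x: "x \<in> V" and y: "y \<in> V"
  shows "{\<lbrakk>a,b\<rbrakk> \<oplus> i | a b i. a \<in> coset L I x \<and> b \<in> coset L I y \<and> i \<in> I} = coset L I \<lbrakk>x,y\<rbrakk>"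
proof -
  have sI: "subspace L I" using iI by (rule ideal_subspace)
  have IV: "I \<subseteq> V" and I0: "\<zero> \<in> I" and Iadd: "\<And>a b. a \<in> I \<Longrightarrow> b \<in> I \<Longrightarrow> a \<oplus> b \<in> I"
    using subD[OF sI] by auto
  have Ibr1: "\<And>u i. u \<in> V \<Longrightarrow> i \<in> I \<Longrightarrow> \<lbrakk>u,i\<rbrakk> \<in> I" and Ibr2: "\<And>u i. u \<in> V \<Longrightarrow> i \<in> I \<Longrightarrow> \<lbrakk>i,u\<rbrakk> \<in> I"
    using iI unfolding ideal_def by blast+
  show ?thesis
  proof (intro set_eqI iffI)
    fix w assume "w \<in> {\<lbrakk>a,b\<rbrakk> \<oplus> i | a b i. a \<in> coset L I x \<and> b \<in> coset L I y \<and> i \<in> I}"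
    then obtain a b k where w: "w = \<lbrakk>a,b\<rbrakk> \<oplus> k" and ab: "a \<in> coset L I x" "b \<in> coset L I y" and k: "k \<in> I"
      by blast
    obtain i where a: "a = x \<oplus> i" and i: "i \<in> I" using ab(1) by (rule cosetE)
    obtain j where b: "b = y \<oplus> j" and j: "j \<in> I" using ab(2) by (rule cosetE)
    have v: "i \<in> V" "j \<in> V" "k \<in> V" using i j k IV by auto
    have "w = \<lbrakk>x,y\<rbrakk> \<oplus> (\<lbrakk>x,j\<rbrakk> \<oplus> (\<lbrakk>i,y\<rbrakk> \<oplus> (\<lbrakk>i,j\<rbrakk> \<oplus> k)))"
      unfolding w a b using v x y by (simp add: br_add_l br_add_r add_ac)
    moreover have "\<lbrakk>x,j\<rbrakk> \<oplus> (\<lbrakk>i,y\<rbrakk> \<oplus> (\<lbrakk>i,j\<rbrakk> \<oplus> k)) \<in> I"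
      by (intro Iadd Ibr1 Ibr2 x y i j k v)
    ultimately show "w \<in> coset L I \<lbrakk>x,y\<rbrakk>" by (intro cosetI') 
  next
    fix w assume "w \<in> coset L I \<lbrakk>x,y\<rbrakk>"
    then obtain i where w: "w = \<lbrakk>x,y\<rbrakk> \<oplus> i" and i: "i \<in> I" by (rule cosetE)
    moreover have "x \<in> coset L I x" "y \<in> coset L I y" using coset_self[OF sI] x y by auto
    ultimately show "w \<in> {\<lbrakk>a,b\<rbrakk> \<oplus> i | a b i. a \<in> coset L I x \<and> b \<in> coset L I y \<and> i \<in> I}" by blast
  qed
qed

lemma q_carrier: "lcarrier (quot L I) = coset L I ` V" by (simp add: quot_def)
lemma q_zero: "lzero (quot L I) = I" by (simp add: quot_def)
lemma q_add: "subspace L I \<Longrightarrow> x \<in> V \<Longrightarrow> y \<in> V \<Longrightarrow>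
   ladd (quot L I) (coset L I x) (coset L I y) = coset L I (x \<oplus> y)"
  using q_add_set by (simp add: quot_def)
lemma q_smul: "subspace L I \<Longrightarrow> x \<in> V \<Longrightarrow>
   lsmul (quot L I) c (coset L I x) = coset L I (c \<cdot> x)"
  using q_smul_set by (simp add: quot_def)
lemma q_neg: "subspace L I \<Longrightarrow> x \<in> V \<Longrightarrow>
   lneg (quot L I) (coset L I x) = coset L I (\<ominus> x)"
  using q_neg_set by (simp add: quot_def)
lemma q_br: "ideal L I \<Longrightarrow> x \<in> V \<Longrightarrow> y \<in> V \<Longrightarrow>
   lbr (quot L I) (coset L I x) (coset L I y) = coset L I \<lbrakk>x,y\<rbrakk>"
  using q_br_set by (simp add: quot_def)
lemma q_lie: assumes iI: "ideal L I" and x: "x \<in> V" and y: "y \<in> V"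
  shows "lie (quot L I) (coset L I x) (coset L I y) = coset L I (lie L x y)"
proof -
  have sI: "subspace L I" using iI by (rule ideal_subspace)
  have "lie (quot L I) (coset L I x) (coset L I y) = ladd (quot L I) (coset L I \<lbrakk>x,y\<rbrakk>) (coset L I \<lbrakk>y,x\<rbrakk>)"
    unfolding lie_def q_br[OF iI x y] q_br[OF iI y x] ..
  also have "\<dots> = coset L I (lie L x y)" unfolding lie_def by (rule q_add[OF sI]) (use x y in auto)
  finally show ?thesis .
qed

lemma quot_leibniz: assumes iI: "ideal L I" shows "leibniz_algebra (quot L I)"
proof -
  have sI: "subspace L I" using iI by (rule ideal_subspace)
  note q = q_add[OF sI] q_smul[OF sI] q_neg[OF sI] q_br[OF iI]
  have z: "lzero (quot L I) = coset L I \<zero>" using coset_zero[OF sI] q_zero by simp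
  show ?thesis unfolding leibniz_algebra_def Let_def q_carrier ball_img z
    apply (intro conjI ballI allI)
    apply (simp_all add: q)
    apply (simp add: add_assoc)
    apply (metis add_comm)
    apply (simp add: smul_add)
    apply (simp add: add_smul)
    apply (simp add: mult_smul)
    apply (simp add: br_add_l)
    apply (simp add: br_add_r)
    apply (simp add: br_smul_l)
    apply (simp add: br_smul_r)
    apply (simp add: leib)
    done
qed


lemma closed_L: "closed L" unfolding closed_def by simp

lemma gamma_ideal: "ideal L (gamma L k)"
proof (cases k)
  case (Suc i)
  then show ?thesis
  proof (cases i)
    case (Suc j)
    have "{lie L m x | m x. m \<in> gamma L (Suc j) \<and> x \<in> lcarrier L} \<subseteq> V"
      using gamma_V by (blast intro: lie_c)
    then show ?thesis using \<open>k = Suc i\<close> Suc gamma_SS[of L j] ideal_gen_ideal by simp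
  qed simp
qed simp

lemma pi_hom: assumes iI: "ideal L I" shows "leib_hom (coset L I) L (quot L I)"
proof -
  have sI: "subspace L I" using iI by (rule ideal_subspace)
  show ?thesis unfolding leib_hom_def
    by (simp add: q_carrier q_add[OF sI] q_smul[OF sI] q_br[OF iI])
qed

lemma lie_iter_pi: assumes iI: "ideal L I"
  shows "(\<forall>i\<le>k. ys i \<in> V) \<Longrightarrow> lie_iter (quot L I) (\<lambda>i. coset L I (ys i)) k = coset L I (lie_iter L ys k)"
proof (induction k)
  case (Suc k)
  then have "lie_iter (quot L I) (\<lambda>i. coset L I (ys i)) k = coset L I (lie_iter L ys k)" by simp
  moreover have "lie_iter L ys k \<in> V" "ys (Suc k) \<in> V" using Suc.prems lie_iter_c by auto
  ultimately show ?case using q_lie[OF iI] by simp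
qed simp

lemma zero_ideal: "ideal L {\<zero>}" using zeta_ideal[of 0] by simp

lemma pi_iso_zero: "leib_iso (coset L {\<zero>}) L (quot L {\<zero>})"
proof -
  have sI: "subspace L {\<zero>}" using zero_ideal by (rule ideal_subspace)
  have "inj_on (coset L {\<zero>}) V"
  proof (rule inj_onI)
    fix x y assume x: "x \<in> V" and y: "y \<in> V" and e: "coset L {\<zero>} x = coset L {\<zero>} y"
    then have "\<ominus> x \<oplus> y = \<zero>" using coset_eq[OF sI x y] by simp
    then have "x \<oplus> (\<ominus> x \<oplus> y) = x" using x by simp
    then show "x = y" using x y by simp
  qed
  then have "bij_betw (coset L {\<zero>}) V (lcarrier (quot L {\<zero>}))"
    unfolding bij_betw_def q_carrier by simp
  then show ?thesis using pi_hom[OF zero_ideal] unfolding leib_iso_def by simp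
qed

lemma gamma_quot: assumes iI: "ideal L I"
  shows "gamma (quot L I) (Suc k) = coset L I ` gamma L (Suc k)"
proof -
  have sI: "subspace L I" using iI by (rule ideal_subspace)
  interpret Q: LA "quot L I" by (rule LA.intro, rule quot_leibniz[OF iI])
  have ph: "leib_hom (coset L I) L (quot L I)" by (rule pi_hom[OF iI])
  have gV: "gamma L (Suc k) \<subseteq> V" by (rule gamma_V)
  have sG: "subspace L (gamma L (Suc k))" using gamma_ideal ideal_subspace by blast
  have sGq: "subspace (quot L I) (gamma (quot L I) (Suc k))" using Q.gamma_ideal Q.ideal_subspace by blast
  have repr: "\<And>XS. \<forall>i. XS i \<in> lcarrier (quot L I) \<Longrightarrow> \<exists>ys. (\<forall>i. ys i \<in> V) \<and> XS = (\<lambda>i. coset L I (ys i))"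
  proof -
    fix XS assume h: "\<forall>i. XS i \<in> lcarrier (quot L I)"
    define ys where "ys = (\<lambda>i. SOME y. y \<in> V \<and> XS i = coset L I y)"
    have "\<And>i. ys i \<in> V \<and> XS i = coset L I (ys i)"
    proof -
      fix i
      have "XS i \<in> coset L I ` V" using h unfolding q_carrier by blast
      then have "\<exists>y. y \<in> V \<and> XS i = coset L I y" by blast
      then show "ys i \<in> V \<and> XS i = coset L I (ys i)" unfolding ys_def by (rule someI_ex)
    qed
    then show "\<exists>ys. (\<forall>i. ys i \<in> V) \<and> XS = (\<lambda>i. coset L I (ys i))" by (intro exI[of _ ys]) auto
  qed
  show ?thesis
  proof
    have "subspace (quot L I) (coset L I ` gamma L (Suc k))" unfolding subspace_def
    proof (intro conjI ballI allI)
      show "coset L I ` gamma L (Suc k) \<subseteq> lcarrier (quot L I)" using gV q_carrier by auto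
      have "lzero (quot L I) = coset L I \<zero>" using coset_zero[OF sI] q_zero by simp
      then show "lzero (quot L I) \<in> coset L I ` gamma L (Suc k)" using subD_0[OF sG] by simp
      fix A B assume "A \<in> coset L I ` gamma L (Suc k)" "B \<in> coset L I ` gamma L (Suc k)"
      then obtain a b where A: "A = coset L I a" and B: "B = coset L I b" and ab: "a \<in> gamma L (Suc k)" "b \<in> gamma L (Suc k)" by blast
      have "ladd (quot L I) A B = coset L I (a \<oplus> b)" unfolding A B using ab gV q_add[OF sI] by auto
      then show "ladd (quot L I) A B \<in> coset L I ` gamma L (Suc k)" using subD_add[OF sG ab] by simp
    next
      fix c A assume "A \<in> coset L I ` gamma L (Suc k)"
      then obtain a where A: "A = coset L I a" and a: "a \<in> gamma L (Suc k)" by blast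
      have "lsmul (quot L I) c A = coset L I (c \<cdot> a)" unfolding A using a gV q_smul[OF sI] by auto
      then show "lsmul (quot L I) c A \<in> coset L I ` gamma L (Suc k)" using subD_smul[OF sG a] by simp
    qed
    moreover have "iters (quot L I) k \<subseteq> coset L I ` gamma L (Suc k)"
    proof
      fix w assume "w \<in> iters (quot L I) k"
      then obtain XS where w: "w = lie_iter (quot L I) XS k" and XS: "\<forall>i. XS i \<in> lcarrier (quot L I)"
        unfolding iters_def by blast
      obtain ys where ys: "\<forall>i. ys i \<in> V" and XSe: "XS = (\<lambda>i. coset L I (ys i))" using repr[OF XS] by blast
      have "w = coset L I (lie_iter L ys k)" unfolding w XSe using lie_iter_pi[OF iI] ys by simp
      moreover have "lie_iter L ys k \<in> gamma L (Suc k)" using lie_iter_gamma ys by simp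
      ultimately show "w \<in> coset L I ` gamma L (Suc k)" by simp
    qed
    ultimately show "gamma (quot L I) (Suc k) \<subseteq> coset L I ` gamma L (Suc k)"
      unfolding Q.gamma_span by (rule Q.span_least)
  next
    let ?P = "{x \<in> V. coset L I x \<in> gamma (quot L I) (Suc k)}"
    have "subspace L ?P" unfolding subspace_def
    proof (intro conjI ballI allI)
      show "?P \<subseteq> V" by blast
      have "coset L I \<zero> = lzero (quot L I)" using coset_zero[OF sI] q_zero by simp
      then show "\<zero> \<in> ?P" using Q.subD_0[OF sGq] by simp
      fix x y assume x: "x \<in> ?P" and y: "y \<in> ?P"
      then have "coset L I (x \<oplus> y) = ladd (quot L I) (coset L I x) (coset L I y)" using q_add[OF sI] by simp
      then show "x \<oplus> y \<in> ?P" using x y Q.subD_add[OF sGq] by simp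
    next
      fix c x assume x: "x \<in> ?P"
      then have "coset L I (c \<cdot> x) = lsmul (quot L I) c (coset L I x)" using q_smul[OF sI] by simp
      then show "c \<cdot> x \<in> ?P" using x Q.subD_smul[OF sGq] by simp
    qed
    moreover have "iters L k \<subseteq> ?P"
    proof
      fix w assume "w \<in> iters L k"
      then obtain ys where w: "w = lie_iter L ys k" and ys: "\<forall>i. ys i \<in> V" unfolding iters_def by blast
      have "coset L I w = lie_iter (quot L I) (\<lambda>i. coset L I (ys i)) k" unfolding w using lie_iter_pi[OF iI] ys by simp
      moreover have "lie_iter (quot L I) (\<lambda>i. coset L I (ys i)) k \<in> iters (quot L I) k"
        unfolding iters_def using ys q_carrier by auto
      ultimately have "coset L I w \<in> gamma (quot L I) (Suc k)" unfolding Q.gamma_span using Q.span_sub by auto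
      then show "w \<in> ?P" using w ys lie_iter_c by simp
    qed
    ultimately have "span L (iters L k) \<subseteq> ?P" by (rule span_least)
    then show "coset L I ` gamma L (Suc k) \<subseteq> gamma (quot L I) (Suc k)" unfolding gamma_span by blast
  qed
qed


section \<open>Frattini consequences\<close>

lemma lie_gamma2: "x \<in> V \<Longrightarrow> y \<in> V \<Longrightarrow> lie L x y \<in> gamma L (Suc (Suc 0))"
  unfolding gamma_SS by (rule subsetD[OF ideal_gen_sub]) auto

lemma zeta_stable: assumes fr: "frattini L = {\<zero>}" shows "zeta L (Suc k) = zeta L (Suc 0)"
proof (induction k)
  case (Suc k)
  show ?case
  proof (intro set_eqI iffI)
    fix x assume x: "x \<in> zeta L (Suc (Suc k))"
    have xV: "x \<in> V" using x by simp
    have "\<forall>y\<in>V. lie L x y \<in> zeta L 0"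
    proof
      fix y assume y: "y \<in> V"
      have "lie L x y \<in> zeta L (Suc k)" using x y unfolding zeta.simps(2)[of L "Suc k"] by blast
      then have "lie L x y \<in> zeta L (Suc 0)" unfolding Suc.IH .
      then have "lie L x y = \<zero>" using Z1_gamma2[OF fr _ lie_gamma2[OF xV y]] by blast
      then show "lie L x y \<in> zeta L 0" by simp
    qed
    then show "x \<in> zeta L (Suc 0)" using xV by simp
  next
    fix x assume x: "x \<in> zeta L (Suc 0)"
    have "\<forall>y\<in>V. lie L x y \<in> zeta L (Suc k)"
    proof
      fix y assume y: "y \<in> V"
      have "lie L x y = \<zero>" using x y by simp
      moreover have "\<zero> \<in> zeta L (Suc k)" using subD_0[OF zeta_sub] .
      ultimately show "lie L x y \<in> zeta L (Suc k)" by simp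
    qed
    then show "x \<in> zeta L (Suc (Suc k))" using x by simp
  qed
qed simp

lemma zeta_gamma_trivial: assumes fr: "frattini L = {\<zero>}"
  and z1: "z \<in> zeta L n" and z2: "z \<in> gamma L (Suc n)" shows "z = \<zero>"
proof (cases n)
  case 0
  then show ?thesis using z1 by simp
next
  case (Suc m)
  have "z \<in> zeta L (Suc m)" using z1 unfolding Suc .
  then have "z \<in> zeta L (Suc 0)" unfolding zeta_stable[OF fr, of m] .
  moreover have "z \<in> gamma L (Suc (Suc 0))" using z2 gamma_anti[of n] Suc by auto
  ultimately show ?thesis by (rule Z1_gamma2[OF fr])
qed

lemma zeta_absorb: assumes fr: "frattini L = {\<zero>}" and n: "1 \<le> n" and x: "x \<in> V"
  and h: "\<forall>y\<in>V. lie L x y \<in> zeta L n" shows "x \<in> zeta L n"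
proof -
  obtain m where m: "n = Suc m" using n by (cases n) auto
  have "x \<in> zeta L (Suc n)" using x h unfolding zeta.simps(2)[of L n] by blast
  moreover have a: "zeta L (Suc n) = zeta L (Suc 0)" by (rule zeta_stable[OF fr])
  moreover have b: "zeta L n = zeta L (Suc 0)" unfolding m by (rule zeta_stable[OF fr])
  ultimately show ?thesis by (simp only:)
qed

end



theorem mainTheorem16:
  fixes g :: "('k::field, 'v) leib" and n :: nat
  assumes "(2::'k) \<noteq> 0"
    and "leibniz_algebra g"
    and "frattini g = {lzero g}"
  shows "leibniz_algebra (quot g (zeta g n)) \<and>
         lie_stem n (quot g (zeta g n)) \<and>
         lie_isoclinic n (quot g (zeta g n)) g \<and>
         (\<forall>h :: ('k, 'w) leib. leibniz_algebra h \<and> lie_stem n h \<and> lie_isoclinic n h g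
              \<longrightarrow> leib_isomorphic h (quot g (zeta g n)))"
proof -
  interpret G: LA g by (rule LA.intro) (rule assms(2))
  note fr = assms(3)
  define Z where "Z = zeta g n"
  define q where "q = quot g Z"
  define \<gamma>g where "\<gamma>g = gamma g (Suc n)"
  have iZ: "ideal g Z" unfolding Z_def by (rule G.zeta_ideal)
  have sZ: "subspace g Z" using iZ by (rule G.ideal_subspace)
  have Lq: "leibniz_algebra q" unfolding q_def by (rule G.quot_leibniz[OF iZ])
  interpret Q: LA q by (rule LA.intro) (rule Lq)
  have ZG: "\<And>z. z \<in> Z \<Longrightarrow> z \<in> \<gamma>g \<Longrightarrow> z = lzero g"
    unfolding Z_def \<gamma>g_def using G.zeta_gamma_trivial[OF fr] by blast
  have q0: "lzero q = coset g Z (lzero g)" unfolding q_def using G.coset_zero[OF sZ] G.q_zero by simp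
  have qV: "lcarrier q = coset g Z ` lcarrier g" unfolding q_def by (rule G.q_carrier)
  have zq: "zeta q n = {lzero q}"
  proof (cases n)
    case 0
    then show ?thesis by simp
  next
    case (Suc m)
    then have n1: "1 \<le> n" by simp
    have "zeta q k = {lzero q}" for k
    proof (induction k)
      case (Suc k)
      show ?case
      proof (intro set_eqI iffI)
        fix A assume A: "A \<in> zeta q (Suc k)"
        then have AV: "A \<in> lcarrier q" by simp
        then obtain x where x: "x \<in> lcarrier g" and Ax: "A = coset g Z x" using qV by blast
        have "\<forall>y\<in>lcarrier g. lie g x y \<in> Z"
        proof
          fix y assume y: "y \<in> lcarrier g"
          have "coset g Z y \<in> lcarrier q" using qV y by simp
          then have "lie q A (coset g Z y) \<in> zeta q k" using A unfolding zeta.simps(2)[of q k] by blast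
          then have "lie q A (coset g Z y) = lzero q" using Suc.IH by simp
          moreover have "lie q A (coset g Z y) = coset g Z (lie g x y)" unfolding Ax q_def by (rule G.q_lie[OF iZ x y])
          ultimately have "coset g Z (lie g x y) = coset g Z (lzero g)" using q0 by simp
          then have "ladd g (lneg g (lzero g)) (lie g x y) \<in> Z" using G.coset_eq[OF sZ G.zero_c G.lie_c[OF x y]] by simp
          then show "lie g x y \<in> Z" using x y by simp
        qed
        then have "x \<in> Z" unfolding Z_def by (rule G.zeta_absorb[OF fr n1 x])
        then have "A = lzero q" unfolding Ax q0 using G.coset_mem[OF sZ] G.coset_zero[OF sZ] by simp
        then show "A \<in> {lzero q}" by simp
      next
        fix A assume "A \<in> {lzero q}"
        then have A: "A = lzero q" by simp
        have "\<forall>B\<in>lcarrier q. lie q A B \<in> zeta q k"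
        proof
          fix B assume "B \<in> lcarrier q"
          then obtain y where y: "y \<in> lcarrier g" and By: "B = coset g Z y" using qV by blast
          have "lie q A B = coset g Z (lie g (lzero g) y)" unfolding A By q0 unfolding q_def by (rule G.q_lie[OF iZ G.zero_c y])
          then have "lie q A B = lzero q" using y q0 by simp
          then show "lie q A B \<in> zeta q k" using Suc.IH by simp
        qed
        moreover have "A \<in> lcarrier q" using A Q.zero_c by simp
        ultimately show "A \<in> zeta q (Suc k)" unfolding zeta.simps(2)[of q k] by blast
      qed
    qed simp
    then show ?thesis .
  qed
  have part1: "leibniz_algebra (quot g (zeta g n))" using Lq unfolding q_def Z_def .
  have gqsub: "subspace q (gamma q (Suc n))" by (rule Q.ideal_subspace[OF Q.gamma_ideal])
  have part2: "lie_stem n (quot g (zeta g n))"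
    unfolding lie_stem_def Z_def[symmetric] q_def[symmetric] zq using Q.subD_0[OF gqsub] by simp
  have \<gamma>gV: "\<gamma>g \<subseteq> lcarrier g" unfolding \<gamma>g_def by (rule G.gamma_V)
  have s\<gamma>g: "subspace g \<gamma>g" unfolding \<gamma>g_def by (rule G.ideal_subspace[OF G.gamma_ideal])
  have \<gamma>q: "gamma q (Suc n) = coset g Z ` \<gamma>g" unfolding q_def \<gamma>g_def by (rule G.gamma_quot[OF iZ])
  have inj_pi: "inj_on (coset g Z) \<gamma>g"
  proof (rule inj_onI)
    fix x y assume x: "x \<in> \<gamma>g" and y: "y \<in> \<gamma>g" and e: "coset g Z x = coset g Z y"
    have xv: "x \<in> lcarrier g" and yv: "y \<in> lcarrier g" using x y \<gamma>gV by auto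
    have d1: "ladd g (lneg g x) y \<in> Z" using e G.coset_eq[OF sZ xv yv] by simp
    have d2: "ladd g (lneg g x) y \<in> \<gamma>g" using G.subD_add[OF s\<gamma>g G.subspace_neg[OF s\<gamma>g x] y] .
    have "ladd g (lneg g x) y = lzero g" using ZG[OF d1 d2] .
    then have "ladd g x (ladd g (lneg g x) y) = x" using xv by simp
    then show "x = y" using xv yv by simp
  qed
  have \<pi>iso: "leib_iso (coset g Z) (sub g \<gamma>g) (sub q (gamma q (Suc n)))"
    unfolding leib_iso_def leib_hom_def sub_simps
  proof (intro conjI ballI allI)
    show "coset g Z ` \<gamma>g \<subseteq> gamma q (Suc n)" using \<gamma>q by simp
    show "bij_betw (coset g Z) \<gamma>g (gamma q (Suc n))" unfolding bij_betw_def using inj_pi \<gamma>q by simp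
    fix x y assume x: "x \<in> \<gamma>g" and y: "y \<in> \<gamma>g"
    have xv: "x \<in> lcarrier g" and yv: "y \<in> lcarrier g" using x y \<gamma>gV by auto
    show "coset g Z (ladd g x y) = ladd q (coset g Z x) (coset g Z y)"
      unfolding q_def using G.q_add[OF sZ xv yv] by simp
    show "coset g Z (lbr g x y) = lbr q (coset g Z x) (coset g Z y)"
      unfolding q_def using G.q_br[OF iZ xv yv] by simp
  next
    fix c x assume x: "x \<in> \<gamma>g"
    have xv: "x \<in> lcarrier g" using x \<gamma>gV by auto
    show "coset g Z (lsmul g c x) = lsmul q c (coset g Z x)"
      unfolding q_def using G.q_smul[OF sZ xv] by simp
  qed
  define \<xi> where "\<xi> = inv_into \<gamma>g (coset g Z)"
  have \<xi>iso: "leib_iso \<xi> (sub q (gamma q (Suc n))) (sub g \<gamma>g)"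
  proof -
    have "closed (sub g \<gamma>g)" unfolding \<gamma>g_def by (rule closed_sub[OF G.gamma_ideal])
    from iso_inv[OF \<pi>iso this] show ?thesis unfolding \<xi>_def by simp
  qed
  define \<eta> where "\<eta> = inv_into (lcarrier q) (coset q {lzero q})"
  have \<eta>iso: "leib_iso \<eta> (quot q {lzero q}) q"
    unfolding \<eta>_def by (rule iso_inv[OF Q.pi_iso_zero Q.closed_L])
  have injq: "inj_on (coset q {lzero q}) (lcarrier q)"
    using Q.pi_iso_zero unfolding leib_iso_def bij_betw_def by blast
  have part3: "lie_isoclinic n (quot g (zeta g n)) g"
    unfolding lie_isoclinic_def Z_def[symmetric] q_def[symmetric] zq \<gamma>g_def[symmetric]
  proof (intro exI[of _ \<eta>] exI[of _ \<xi>] conjI allI impI)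
    show "leib_iso \<eta> (quot q {lzero q}) q" by (rule \<eta>iso)
    show "leib_iso \<xi> (sub q (gamma q (Suc n))) (sub g \<gamma>g)" by (rule \<xi>iso)
    fix xs ys assume H: "\<forall>i\<le>n. xs i \<in> lcarrier q \<and> ys i \<in> lcarrier g \<and>
        \<eta> (coset q {lzero q} (xs i)) = coset g Z (ys i)"
    have xe: "\<forall>i\<le>n. xs i = coset g Z (ys i)"
    proof (intro allI impI)
      fix i assume i: "i \<le> n"
      have "\<eta> (coset q {lzero q} (xs i)) = xs i" unfolding \<eta>_def using inv_into_f_f[OF injq] H i by blast
      then show "xs i = coset g Z (ys i)" using H i by simp
    qed
    have ysv: "\<forall>i\<le>n. ys i \<in> lcarrier g" using H by blast
    have "lie_iter q xs n = lie_iter q (\<lambda>i. coset g Z (ys i)) n" using xe by (rule lie_iter_cong)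
    also have "\<dots> = coset g Z (lie_iter g ys n)" unfolding q_def by (rule G.lie_iter_pi[OF iZ ysv])
    finally have "lie_iter q xs n = coset g Z (lie_iter g ys n)" .
    moreover have "lie_iter g ys n \<in> \<gamma>g" unfolding \<gamma>g_def by (rule G.lie_iter_gamma[OF ysv])
    ultimately show "\<xi> (lie_iter q xs n) = lie_iter g ys n" unfolding \<xi>_def using inv_into_f_f[OF inj_pi] by simp
  qed
  have Q0: "lzero q = Z" unfolding q_def by (rule G.q_zero)
  have part4: "\<forall>h :: ('k, 'w) leib. leibniz_algebra h \<and> lie_stem n h \<and> lie_isoclinic n h g
              \<longrightarrow> leib_isomorphic h (quot g (zeta g n))"
  proof (intro allI impI)
    fix h :: "('k, 'w) leib"
    assume Hh: "leibniz_algebra h \<and> lie_stem n h \<and> lie_isoclinic n h g"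
    then have Lh: "leibniz_algebra h" and st: "lie_stem n h" and ic: "lie_isoclinic n h g" by auto
    interpret H: LA h by (rule LA.intro) (rule Lh)
    define Zh where "Zh = zeta h n"
    define \<gamma>h where "\<gamma>h = gamma h (Suc n)"
    obtain \<eta>' \<xi>' where \<eta>': "leib_iso \<eta>' (quot h Zh) q" and \<xi>': "leib_iso \<xi>' (sub h \<gamma>h) (sub g \<gamma>g)"
      and cond: "\<forall>xs ys. (\<forall>i\<le>n. xs i \<in> lcarrier h \<and> ys i \<in> lcarrier g \<and>
                   \<eta>' (coset h Zh (xs i)) = coset g Z (ys i))
               \<longrightarrow> \<xi>' (lie_iter h xs n) = lie_iter g ys n"
      using ic unfolding lie_isoclinic_def Zh_def[symmetric] \<gamma>h_def[symmetric] Z_def[symmetric]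
        q_def[symmetric] \<gamma>g_def[symmetric] by blast
    have iZh: "ideal h Zh" unfolding Zh_def by (rule H.zeta_ideal)
    have sZh: "subspace h Zh" using iZh by (rule H.ideal_subspace)
    have Lqh: "leibniz_algebra (quot h Zh)" by (rule H.quot_leibniz[OF iZh])
    interpret QH: LA "quot h Zh" by (rule LA.intro) (rule Lqh)
    have stem': "Zh \<subseteq> \<gamma>h" using st unfolding lie_stem_def Zh_def \<gamma>h_def .
    have Zh0: "Zh = {lzero h}"
    proof (cases n)
      case 0
      then show ?thesis unfolding Zh_def by simp
    next
      case (Suc m)
      have h\<eta>: "leib_hom \<eta>' (quot h Zh) q" using \<eta>' unfolding leib_iso_def by blast
      have h\<xi>: "leib_hom \<xi>' (sub h \<gamma>h) (sub g \<gamma>g)" using \<xi>' unfolding leib_iso_def by blast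
      have inj\<xi>: "inj_on \<xi>' \<gamma>h" using \<xi>' unfolding leib_iso_def bij_betw_def by simp
      have \<gamma>hV: "\<gamma>h \<subseteq> lcarrier h" unfolding \<gamma>h_def by (rule H.gamma_V)
      have s\<gamma>h: "subspace h \<gamma>h" unfolding \<gamma>h_def by (rule H.ideal_subspace[OF H.gamma_ideal])
      have \<xi>map: "\<And>w. w \<in> \<gamma>h \<Longrightarrow> \<xi>' w \<in> \<gamma>g" using homD(1)[OF h\<xi>] by simp
      have qhV: "lcarrier (quot h Zh) = coset h Zh ` lcarrier h" by (rule H.q_carrier)
      have \<eta>Z: "\<eta>' Zh = Z"
      proof -
        have "\<eta>' (lzero (quot h Zh)) = lzero q"
          by (rule hom_zero[OF h\<eta> QH.zero_c QH.smul_zero_l[OF QH.zero_c]]) (use Q.smul_zero_l in blast)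
        then show ?thesis using H.q_zero Q0 by simp
      qed
      have \<xi>0: "\<xi>' (lzero h) = lzero g"
      proof -
        have "lzero (sub h \<gamma>h) \<in> lcarrier (sub h \<gamma>h)" using H.subD_0[OF s\<gamma>h] by simp
        moreover have "lsmul (sub h \<gamma>h) 0 (lzero (sub h \<gamma>h)) = lzero (sub h \<gamma>h)" by simp
        moreover have "\<forall>x\<in>lcarrier (sub g \<gamma>g). lsmul (sub g \<gamma>g) 0 x = lzero (sub g \<gamma>g)"
          using \<gamma>gV by auto
        ultimately have "\<xi>' (lzero (sub h \<gamma>h)) = lzero (sub g \<gamma>g)" by (rule hom_zero[OF h\<xi>])
        then show ?thesis by simp
      qed
      define S where "S = {w \<in> \<gamma>h. coset g Z (\<xi>' w) = \<eta>' (coset h Zh w)}"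
      have sS: "subspace h S" unfolding subspace_def
      proof (intro conjI ballI allI)
        show "S \<subseteq> lcarrier h" unfolding S_def using \<gamma>hV by blast
        have "coset g Z (\<xi>' (lzero h)) = Z" using \<xi>0 G.coset_zero[OF sZ] by simp
        moreover have "\<eta>' (coset h Zh (lzero h)) = Z" using H.coset_zero[OF sZh] \<eta>Z by simp
        ultimately show "lzero h \<in> S" unfolding S_def using H.subD_0[OF s\<gamma>h] by simp
        fix w w' assume w: "w \<in> S" and w': "w' \<in> S"
        have wg: "w \<in> \<gamma>h" "w' \<in> \<gamma>h" using w w' unfolding S_def by auto
        have wv: "w \<in> lcarrier h" "w' \<in> lcarrier h" using wg \<gamma>hV by auto
        have xv: "\<xi>' w \<in> lcarrier g" "\<xi>' w' \<in> lcarrier g" using \<xi>map wg \<gamma>gV by auto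
        have "\<xi>' (ladd h w w') = ladd g (\<xi>' w) (\<xi>' w')" using homD(2)[OF h\<xi>] wg by simp
        then have "coset g Z (\<xi>' (ladd h w w')) = ladd q (coset g Z (\<xi>' w)) (coset g Z (\<xi>' w'))"
          unfolding q_def using G.q_add[OF sZ xv] by simp
        also have "\<dots> = ladd q (\<eta>' (coset h Zh w)) (\<eta>' (coset h Zh w'))" using w w' unfolding S_def by simp
        also have "\<dots> = \<eta>' (ladd (quot h Zh) (coset h Zh w) (coset h Zh w'))"
          using homD(2)[OF h\<eta>] wv qhV by simp
        also have "\<dots> = \<eta>' (coset h Zh (ladd h w w'))" using H.q_add[OF sZh wv] by simp
        finally show "ladd h w w' \<in> S" unfolding S_def using H.subD_add[OF s\<gamma>h wg] by simp
      next
        fix c w assume w: "w \<in> S"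
        have wg: "w \<in> \<gamma>h" using w unfolding S_def by auto
        have wv: "w \<in> lcarrier h" using wg \<gamma>hV by auto
        have xv: "\<xi>' w \<in> lcarrier g" using \<xi>map wg \<gamma>gV by auto
        have "\<xi>' (lsmul h c w) = lsmul g c (\<xi>' w)" using homD(3)[OF h\<xi>] wg by simp
        then have "coset g Z (\<xi>' (lsmul h c w)) = lsmul q c (coset g Z (\<xi>' w))"
          unfolding q_def using G.q_smul[OF sZ xv] by simp
        also have "\<dots> = lsmul q c (\<eta>' (coset h Zh w))" using w unfolding S_def by simp
        also have "\<dots> = \<eta>' (lsmul (quot h Zh) c (coset h Zh w))"
        proof -
          have m: "coset h Zh w \<in> lcarrier (quot h Zh)" using wv qhV by simp
          show ?thesis using homD(3)[OF h\<eta> m m, of c] by simp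
        qed
        also have "\<dots> = \<eta>' (coset h Zh (lsmul h c w))" using H.q_smul[OF sZh wv] by simp
        finally show "lsmul h c w \<in> S" unfolding S_def using H.subD_smul[OF s\<gamma>h wg] by simp
      qed
      have itS: "iters h n \<subseteq> S"
      proof
        fix w assume "w \<in> iters h n"
        then obtain xs where w: "w = lie_iter h xs n" and xs: "\<forall>i. xs i \<in> lcarrier h"
          unfolding iters_def by blast
        define ys where "ys = (\<lambda>i. SOME y. y \<in> lcarrier g \<and> \<eta>' (coset h Zh (xs i)) = coset g Z y)"
        have ys: "ys i \<in> lcarrier g \<and> \<eta>' (coset h Zh (xs i)) = coset g Z (ys i)" for i
        proof -
          have "coset h Zh (xs i) \<in> lcarrier (quot h Zh)" using xs qhV by simp
          then have "\<eta>' (coset h Zh (xs i)) \<in> lcarrier q" using homD(1)[OF h\<eta>] by blast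
          then have "\<exists>y. y \<in> lcarrier g \<and> \<eta>' (coset h Zh (xs i)) = coset g Z y" using qV by blast
          then show ?thesis unfolding ys_def by (rule someI_ex)
        qed
        have e1: "\<xi>' (lie_iter h xs n) = lie_iter g ys n" using cond xs ys by blast
        have ysv: "\<forall>i\<le>n. ys i \<in> lcarrier g" using ys by blast
        have xsv: "\<forall>i\<le>n. xs i \<in> lcarrier h" using xs by blast
        have xsq: "\<forall>i\<le>n. coset h Zh (xs i) \<in> lcarrier (quot h Zh)" using xs qhV by simp
        have "coset g Z (lie_iter g ys n) = lie_iter q (\<lambda>i. coset g Z (ys i)) n"
          unfolding q_def by (rule G.lie_iter_pi[OF iZ ysv, symmetric])
        also have "\<dots> = lie_iter q (\<lambda>i. \<eta>' (coset h Zh (xs i))) n"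
          by (rule lie_iter_cong) (use ys in simp)
        also have "\<dots> = \<eta>' (lie_iter (quot h Zh) (\<lambda>i. coset h Zh (xs i)) n)"
          by (rule hom_lie_iter[OF h\<eta> QH.closed_L xsq, symmetric])
        also have "\<dots> = \<eta>' (coset h Zh (lie_iter h xs n))" using H.lie_iter_pi[OF iZh xsv] by simp
        finally have "coset g Z (\<xi>' w) = \<eta>' (coset h Zh w)" unfolding w e1 .
        moreover have "w \<in> \<gamma>h" unfolding w \<gamma>h_def by (rule H.lie_iter_gamma[OF xsv])
        ultimately show "w \<in> S" unfolding S_def by blast
      qed
      have \<gamma>hS: "\<gamma>h \<subseteq> S" unfolding \<gamma>h_def H.gamma_span by (rule H.span_least[OF sS itS])
      show ?thesis
      proof (intro set_eqI iffI)
        fix z assume z: "z \<in> Zh"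
        have zg: "z \<in> \<gamma>h" using z stem' by blast
        have "coset g Z (\<xi>' z) = \<eta>' (coset h Zh z)" using \<gamma>hS zg unfolding S_def by blast
        also have "\<dots> = Z" using H.coset_mem[OF sZh z] \<eta>Z by simp
        also have "\<dots> = coset g Z (lzero g)" using G.coset_zero[OF sZ] by simp
        finally have e: "coset g Z (\<xi>' z) = coset g Z (lzero g)" .
        have xz: "\<xi>' z \<in> \<gamma>g" using \<xi>map zg .
        have xv: "\<xi>' z \<in> lcarrier g" using xz \<gamma>gV by auto
        have "ladd g (lneg g (\<xi>' z)) (lzero g) \<in> Z" using e G.coset_eq[OF sZ xv G.zero_c] by simp
        then have "lneg g (\<xi>' z) \<in> Z" using xv by simp
        then have "lneg g (lneg g (\<xi>' z)) \<in> Z" by (rule G.subspace_neg[OF sZ])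
        then have "\<xi>' z \<in> Z" using xv by simp
        then have "\<xi>' z = lzero g" using ZG xz by blast
        then have "\<xi>' z = \<xi>' (lzero h)" using \<xi>0 by simp
        then have "z = lzero h" using inj\<xi> zg H.subD_0[OF s\<gamma>h] by (meson inj_onD)
        then show "z \<in> {lzero h}" by simp
      next
        fix z assume "z \<in> {lzero h}"
        then show "z \<in> Zh" using H.subD_0[OF sZh] by simp
      qed
    qed
    have "leib_iso (\<eta>' \<circ> coset h {lzero h}) h q"
      using iso_comp[OF H.pi_iso_zero \<eta>'[unfolded Zh0]] .
    then show "leib_isomorphic h (quot g (zeta g n))" unfolding leib_isomorphic_def q_def Z_def by blast
  qed
  show ?thesis using part1 part2 part3 part4 by blast
qed


end
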